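(* Let $\Gamma$ be a gain operator on $\ell^\infty_+(\mathcal I)$. Assume there exists a path $\sigma:\mathbb R_+\to\ell^\infty_+(\mathcal I)$ which is continuous (in norm) and increasing (i.e. $r_1\le r_2\Rightarrow \sigma(r_1)\le\sigma(r_2)$), and which satisfies: (i) there is $\rho\in\mathcal K_\infty$ with $\Gamma_\rho(\sigma(r))\le\sigma(r)$ for all $r\ge 0$; (ii) there are $\varphi_{\min},\varphi_{\max}\in\mathcal K_\infty$ with $\varphi_{\min}(r)\mathbf 1\le\sigma(r)\le\varphi_{\max}(r)\mathbf 1$ for all $r\ge0$. Then there exists a path of strict decay for $\Gamma$.
   Context: Let $\mathcal I$ be a nonempty countable index set. $\ell^\infty(\mathcal I)$ is the Banach space of real families $s=(s_i)_{i\in\mathcal I}$ with $\|s\|:=\sup_i|s_i|<\infty$, and $\ell^\infty_+(\mathcal I):=\{s\in\ell^\infty(\mathcal I):s_i\ge0\ \forall i\}$. We write $s^1\le s^2$ iff $s^1_i\le s^2_i$ for all $i$, and $s^1\ll s^2$ iff $\inf_i(s^2_i-s^1_i)>0$. $\mathbf 1$ is the vector with all entries $1$. $\mathcal K$ is the set of continuous strictly increasing $\gamma:\mathbb R_+\to\mathbb R_+$ with $\gamma(0)=0$, and $\mathcal K_\infty$ the set of unbounded $\gamma\in\mathcal K$. A function $\varphi\in\mathcal K_\infty$ acts on $\ell^\infty_+(\mathcal I)$ componentwise: $\varphi(s):=(\varphi(s_i))_i$. For $\mathcal J\subset\mathcal I$ and $s\in\ell^\infty_+(\mathcal I)$, $s_{|\mathcal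 J}$ is the vector agreeing with $s$ on $\mathcal J$ and equal to $0$ elsewhere. Gain operator: for each $i\in\mathcal I$ let $\mathcal I_i\subset\mathcal I\setminus\{i\}$ be a finite (possibly empty) set; $\mathcal G$ is the directed graph with vertex set $\mathcal I$ and edges $ji$ for $i\in\mathcal I$, $j\in\mathcal I_i$. Let $\gamma_{ij}\in\mathcal K_\infty$ ($ji\in E(\mathcal G)$) be a pointwise equicontinuous family (for all $r_0\ge0,\varepsilon>0$ there is $\delta>0$ with $|\gamma_{ij}(r)-\gamma_{ij}(r_0)|\le\varepsilon$ whenever $|r-r_0|\le\delta$, for all edges $ji$). Let $\mu_i:\ell^\infty_+(\mathcal I)\to[0,\infty]$, $i\in\mathcal I$, satisfy: (M1) there is $\xi\in\mathcal K_\infty$ with $\mu_i(0)=0$ and $\mu_i(s)\ge\xi(\|s\|)$ for all $s,i$; (M2) $0\le s^1\le s^2\Rightarrow\mu_i(s^1)\le\mu_i(s^2)$; (M3) for every finite $\mathcal J\subset\mathcal I$ and every $i$, the restriction of $\mu_i$ to $\{s: s_k=0\ \forall k\notin\mathcal J\}$ is finite-valued and continuous; (M4) for every norm-bounded $A\subset\ell^\infty_+(\mathcal I)$ and $\varepsilon>0$ there is $\delta>0$ such that for all $s^0\in A$ and $s\in\ell^\infty_+(\mathcal I)$ with $\|s-s^0\|\le\delta$ we have $\sup_i|\mu_i(s_{|\mathcal I_i})-\mu_i(s^0_{|\mathcal I_i})|\le\varepsilon$. The gain operator is $\Gamma:\ell^\infty_+(\mathcal I)\to\ell^\infty_+(\mathcal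 I)$, $\Gamma_i(s):=\mu_i([\gamma_{ij}(s_j)]_{j\in\mathcal I_i})$, where the argument is the vector with entries $\gamma_{ij}(s_j)$ at $j\in\mathcal I_i$ and $0$ elsewhere. For $\rho\in\mathcal K_\infty$, $\Gamma_\rho:=(\mathrm{id}+\rho)\circ\Gamma$. A path of strict decay for $\Gamma$ is a map $\sigma:\mathbb R_+\to\ell^\infty_+(\mathcal I)$ such that: (i) there is $\rho\in\mathcal K_\infty$ with $\Gamma_\rho(\sigma(r))\le\sigma(r)$ for all $r\ge0$; (ii) there are $\varphi_{\min},\varphi_{\max}\in\mathcal K_\infty$ with $\varphi_{\min}(r)\mathbf 1\le\sigma(r)\le\varphi_{\max}(r)\mathbf 1$ for all $r\ge0$; (iii) each component $\sigma_i$ is a $\mathcal K_\infty$-function; (iv) for every compact interval $K\subset(0,\infty)$ there are $0<l\le L$ with $l|r_1-r_2|\le|\sigma_i^{-1}(r_1)-\sigma_i^{-1}(r_2)|\le L|r_1-r_2|$ for all $r_1,r_2\in K$, $i\in\mathcal I$. *)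

theory Defs
  imports "HOL-Analysis.Analysis"
begin

text \<open>The index set is the (nonempty, countable) type 'i. Vectors of l-infinity are
  functions 'i => real; the order on them is the pointwise order of HOL functions.\<close>

definition linf_pos :: "('i \<Rightarrow> real) set" where
  "linf_pos = {s. bdd_above (range (\<lambda>i. \<bar>s i\<bar>)) \<and> (\<forall>i. 0 \<le> s i)}"

definition supnorm :: "('i \<Rightarrow> real) \<Rightarrow> real" where
  "supnorm s = (SUP i. \<bar>s i\<bar>)"

definition restr :: "('i \<Rightarrow> real) \<Rightarrow> 'i set \<Rightarrow> ('i \<Rightarrow> real)" where
  "restr s J = (\<lambda>k. if k \<in> J then s k else 0)"

definition class_K :: "(real \<Rightarrow> real) \<Rightarrow> bool" where
  "class_K g \<longleftrightarrow> continuous_on {0..} g \<and> strict_mono_on {0..} g \<and> g 0 = 0"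

definition class_Kinf :: "(real \<Rightarrow> real) \<Rightarrow> bool" where
  "class_Kinf g \<longleftrightarrow> class_K g \<and> (\<forall>M. \<exists>r\<ge>0. M < g r)"

definition Gain :: "('i \<Rightarrow> 'i set) \<Rightarrow> ('i \<Rightarrow> 'i \<Rightarrow> real \<Rightarrow> real)
     \<Rightarrow> ('i \<Rightarrow> ('i \<Rightarrow> real) \<Rightarrow> ereal) \<Rightarrow> ('i \<Rightarrow> real) \<Rightarrow> ('i \<Rightarrow> real)" where
  "Gain Ii gam mu s = (\<lambda>i. real_of_ereal (mu i (\<lambda>j. if j \<in> Ii i then gam i j (s j) else 0)))"

definition Gain_rho :: "('i \<Rightarrow> 'i set) \<Rightarrow> ('i \<Rightarrow> 'i \<Rightarrow> real \<Rightarrow> real)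
     \<Rightarrow> ('i \<Rightarrow> ('i \<Rightarrow> real) \<Rightarrow> ereal) \<Rightarrow> (real \<Rightarrow> real) \<Rightarrow> ('i \<Rightarrow> real) \<Rightarrow> ('i \<Rightarrow> real)" where
  "Gain_rho Ii gam mu \<rho> s = (\<lambda>i. Gain Ii gam mu s i + \<rho> (Gain Ii gam mu s i))"

definition gain_operator :: "('i \<Rightarrow> 'i set) \<Rightarrow> ('i \<Rightarrow> 'i \<Rightarrow> real \<Rightarrow> real)
     \<Rightarrow> ('i \<Rightarrow> ('i \<Rightarrow> real) \<Rightarrow> ereal) \<Rightarrow> bool" where
  "gain_operator Ii gam mu \<longleftrightarrow>
     \<comment> \<open>graph: finite in-neighbourhoods without self-loops\<close>
     (\<forall>i. finite (Ii i) \<and> i \<notin> Ii i) \<and>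
     \<comment> \<open>gamma_ij are K_infinity functions\<close>
     (\<forall>i. \<forall>j\<in>Ii i. class_Kinf (gam i j)) \<and>
     \<comment> \<open>pointwise equicontinuity\<close>
     (\<forall>r0\<ge>0. \<forall>\<epsilon>>0. \<exists>\<delta>>0. \<forall>i. \<forall>j\<in>Ii i. \<forall>r\<ge>0.
         \<bar>r - r0\<bar> \<le> \<delta> \<longrightarrow> \<bar>gam i j r - gam i j r0\<bar> \<le> \<epsilon>) \<and>
     \<comment> \<open>values of mu_i in [0, infinity]\<close>
     (\<forall>i. \<forall>s\<in>linf_pos. 0 \<le> mu i s) \<and>
     \<comment> \<open>(M1)\<close>
     (\<exists>\<xi>. class_Kinf \<xi> \<and> (\<forall>i. mu i (\<lambda>_. 0) = 0 \<and>
         (\<forall>s\<in>linf_pos. ereal (\<xi> (supnorm s)) \<le> mu i s))) \<and>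
     \<comment> \<open>(M2)\<close>
     (\<forall>i. \<forall>s1\<in>linf_pos. \<forall>s2\<in>linf_pos. s1 \<le> s2 \<longrightarrow> mu i s1 \<le> mu i s2) \<and>
     \<comment> \<open>(M3)\<close>
     (\<forall>J i. finite J \<longrightarrow>
         (\<forall>s\<in>{s\<in>linf_pos. \<forall>k. k \<notin> J \<longrightarrow> s k = 0}. \<bar>mu i s\<bar> \<noteq> \<infinity>) \<and>
         continuous_on {s\<in>linf_pos. \<forall>k. k \<notin> J \<longrightarrow> s k = 0} (mu i)) \<and>
     \<comment> \<open>(M4)\<close>
     (\<forall>A. A \<subseteq> linf_pos \<longrightarrow> bdd_above (supnorm ` A) \<longrightarrow>
        (\<forall>\<epsilon>>0. \<exists>\<delta>>0. \<forall>s0\<in>A. \<forall>s\<in>linf_pos. supnorm (s - s0) \<le> \<delta> \<longrightarrow>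
           (\<forall>i. \<bar>mu i (restr s (Ii i)) - mu i (restr s0 (Ii i))\<bar> \<le> ereal \<epsilon>))) \<and>
     \<comment> \<open>Gamma maps the positive cone of l-infinity into itself\<close>
     (\<forall>s\<in>linf_pos. Gain Ii gam mu s \<in> linf_pos)"

definition path_of_strict_decay :: "('i \<Rightarrow> 'i set) \<Rightarrow> ('i \<Rightarrow> 'i \<Rightarrow> real \<Rightarrow> real)
     \<Rightarrow> ('i \<Rightarrow> ('i \<Rightarrow> real) \<Rightarrow> ereal) \<Rightarrow> (real \<Rightarrow> ('i \<Rightarrow> real)) \<Rightarrow> bool" where
  "path_of_strict_decay Ii gam mu \<sigma> \<longleftrightarrow>
     (\<forall>r\<ge>0. \<sigma> r \<in> linf_pos) \<and>
     (\<exists>\<rho>. class_Kinf \<rho> \<and> (\<forall>r\<ge>0. Gain_rho Ii gam mu \<rho> (\<sigma> r) \<le> \<sigma> r)) \<and>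
     (\<exists>\<phi>min \<phi>max. class_Kinf \<phi>min \<and> class_Kinf \<phi>max \<and>
        (\<forall>r\<ge>0. (\<lambda>_. \<phi>min r) \<le> \<sigma> r \<and> \<sigma> r \<le> (\<lambda>_. \<phi>max r))) \<and>
     (\<forall>i. class_Kinf (\<lambda>r. \<sigma> r i)) \<and>
     (\<forall>a b. 0 < a \<longrightarrow> a \<le> b \<longrightarrow> (\<exists>l L. 0 < l \<and> l \<le> L \<and>
        (\<forall>r1\<in>{a..b}. \<forall>r2\<in>{a..b}. \<forall>i.
           l * \<bar>r1 - r2\<bar> \<le> \<bar>the_inv_into {0..} (\<lambda>r. \<sigma> r i) r1 - the_inv_into {0..} (\<lambda>r. \<sigma> r i) r2\<bar> \<and>
           \<bar>the_inv_into {0..} (\<lambda>r. \<sigma> r i) r1 - the_inv_into {0..} (\<lambda>r. \<sigma> r i) r2\<bar> \<le> L * \<bar>r1 - r2\<bar>)))"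

end

theory Submission
  imports Defs "HOL-Analysis.Analysis"
begin

section \<open>Basic facts on K-functions\<close>

lemma K_strict: "class_K g \<Longrightarrow> 0 \<le> x \<Longrightarrow> x < y \<Longrightarrow> g x < g y"
  unfolding class_K_def strict_mono_on_def by auto

lemma K_mono: "class_K g \<Longrightarrow> 0 \<le> x \<Longrightarrow> x \<le> y \<Longrightarrow> g x \<le> g y"
  using K_strict[of g x y] by (cases "x = y") auto

lemma K_zero: "class_K g \<Longrightarrow> g 0 = 0"
  unfolding class_K_def by auto

lemma K_nonneg: "class_K g \<Longrightarrow> 0 \<le> x \<Longrightarrow> 0 \<le> g x"
  using K_mono[of g 0 x] K_zero[of g] by auto

lemma K_pos: "class_K g \<Longrightarrow> 0 < x \<Longrightarrow> 0 < g x"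
  using K_strict[of g 0 x] K_zero[of g] by auto

lemma K_cont: "class_K g \<Longrightarrow> continuous_on {0..} g"
  unfolding class_K_def by auto

lemma K_small:
  assumes "class_K g" "0 < \<epsilon>"
  shows "\<exists>\<delta>>0. \<forall>x. 0 \<le> x \<longrightarrow> x \<le> \<delta> \<longrightarrow> g x < \<epsilon>"
proof -
  have "continuous (at 0 within {0..}) g"
    using K_cont[OF assms(1)] by (simp add: continuous_on_eq_continuous_within)
  then obtain d where d: "d > 0" "\<forall>x\<in>{0..}. dist x 0 < d \<longrightarrow> dist (g x) (g 0) < \<epsilon>"
    using assms(2) unfolding continuous_within_eps_delta by blast
  show ?thesis
  proof (intro exI[of _ "d/2"] conjI allI impI)
    fix x :: real assume "0 \<le> x" "x \<le> d/2"
    then have "dist (g x) (g 0) < \<epsilon>" using d by (auto simp: dist_real_def)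
    then show "g x < \<epsilon>" using K_zero[OF assms(1)] by (simp add: dist_real_def)
  qed (use d in auto)
qed

lemma Kinf_K: "class_Kinf g \<Longrightarrow> class_K g"
  unfolding class_Kinf_def by auto

lemma Kinf_big:
  assumes "class_Kinf g"
  shows "\<exists>r\<ge>0. \<forall>x\<ge>r. M < g x"
proof -
  obtain r where r: "r \<ge> 0" "M < g r" using assms unfolding class_Kinf_def by auto
  have "\<forall>x\<ge>r. M < g x" using K_mono[OF Kinf_K[OF assms], of r] r by force
  then show ?thesis using r by auto
qed

lemma KinfI:
  assumes "continuous_on {0..} g" "\<And>x y. 0 \<le> x \<Longrightarrow> x < y \<Longrightarrow> g x < g y" "g 0 = 0"
    "\<And>M. \<exists>r\<ge>0. M < g r"
  shows "class_Kinf g"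
  using assms unfolding class_Kinf_def class_K_def strict_mono_on_def by auto

lemma Kinf_min:
  assumes "class_Kinf f" "class_Kinf g"
  shows "class_Kinf (\<lambda>x. min (f x) (g x))"
proof (rule KinfI)
  show "continuous_on {0..} (\<lambda>x. min (f x) (g x))"
    using K_cont[OF Kinf_K[OF assms(1)]] K_cont[OF Kinf_K[OF assms(2)]]
    by (intro continuous_on_min) auto
  show "\<And>x y. 0 \<le> x \<Longrightarrow> x < y \<Longrightarrow> min (f x) (g x) < min (f y) (g y)"
    using K_strict[OF Kinf_K[OF assms(1)]] K_strict[OF Kinf_K[OF assms(2)]]
    by (metis min_less_iff_disj min_less_iff_conj order_le_less_trans order.strict_implies_order min.cobounded1 min.cobounded2 less_le_trans)
  show "min (f 0) (g 0) = 0" using K_zero[OF Kinf_K[OF assms(1)]] K_zero[OF Kinf_K[OF assms(2)]] by simp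
  fix M
  obtain r1 where "r1 \<ge> 0" "\<forall>x\<ge>r1. M < f x" using Kinf_big[OF assms(1)] by blast
  moreover obtain r2 where "r2 \<ge> 0" "\<forall>x\<ge>r2. M < g x" using Kinf_big[OF assms(2)] by blast
  ultimately show "\<exists>r\<ge>0. M < min (f (r)) (g (r))"
    by (intro exI[of _ "max r1 r2"]) auto
qed

lemma Kinf_scale:
  assumes "class_Kinf f" "c > 0"
  shows "class_Kinf (\<lambda>x. c * f x)"
proof (rule KinfI)
  show "continuous_on {0..} (\<lambda>x. c * f x)"
    using K_cont[OF Kinf_K[OF assms(1)]] by (intro continuous_intros) auto
  show "\<And>x y. 0 \<le> x \<Longrightarrow> x < y \<Longrightarrow> c * f x < c * f y"
    using K_strict[OF Kinf_K[OF assms(1)]] assms(2) by simp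
  show "c * f 0 = 0" using K_zero[OF Kinf_K[OF assms(1)]] by simp
  fix M
  obtain r where "r \<ge> 0" "M / c < f r" using assms(1) unfolding class_Kinf_def by blast
  then show "\<exists>r\<ge>0. M < c * f r" using assms(2)
    by (intro exI[of _ r]) (auto simp: field_simps)
qed

lemma Kinf_comp_scale:
  assumes "class_Kinf f" "c > 0"
  shows "class_Kinf (\<lambda>x. f (c * x))"
proof (rule KinfI)
  have "continuous_on {0..} (\<lambda>x. c * x)" by (intro continuous_intros)
  moreover have "(\<lambda>x. c * x) ` {0..} \<subseteq> {0..}" using assms(2) by auto
  ultimately show "continuous_on {0..} (\<lambda>x. f (c * x))"
    by (rule continuous_on_compose2[OF K_cont[OF Kinf_K[OF assms(1)]]])
  show "\<And>x y. 0 \<le> x \<Longrightarrow> x < y \<Longrightarrow> f (c*x) < f (c*y)"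
    using K_strict[OF Kinf_K[OF assms(1)]] assms(2) by simp
  show "f (c * 0) = 0" using K_zero[OF Kinf_K[OF assms(1)]] by simp
  fix M
  obtain r where "r \<ge> 0" "M < f r" using assms(1) unfolding class_Kinf_def by blast
  then show "\<exists>r\<ge>0. M < f (c * r)" using assms(2)
    by (intro exI[of _ "r / c"]) auto
qed

lemma Kinf_add:
  assumes "class_Kinf f" "class_Kinf g"
  shows "class_Kinf (\<lambda>x. f x + g x)"
proof (rule KinfI)
  show "continuous_on {0..} (\<lambda>x. f x + g x)"
    using K_cont[OF Kinf_K[OF assms(1)]] K_cont[OF Kinf_K[OF assms(2)]]
    by (intro continuous_intros) auto
  show "\<And>x y. 0 \<le> x \<Longrightarrow> x < y \<Longrightarrow> f x + g x < f y + g y"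
    using K_strict[OF Kinf_K[OF assms(1)]] K_strict[OF Kinf_K[OF assms(2)]]
    by (simp add: add_strict_mono)
  show "f 0 + g 0 = 0" using K_zero[OF Kinf_K[OF assms(1)]] K_zero[OF Kinf_K[OF assms(2)]] by simp
  fix M
  obtain r where "r \<ge> 0" "M < f r" using assms(1) unfolding class_Kinf_def by blast
  then show "\<exists>r\<ge>0. M < f r + g r" using K_nonneg[OF Kinf_K[OF assms(2)], of r]
    by (intro exI[of _ r]) auto
qed

section \<open>Uniform equicontinuity on compact sets via Lebesgue numbers\<close>

lemma uniform_from_pointwise:
  fixes S :: "real set" and P :: "real \<Rightarrow> real \<Rightarrow> real \<Rightarrow> bool"
  assumes "compact S"
    and pw: "\<And>x0 \<epsilon>. x0 \<in> S \<Longrightarrow> \<epsilon> > 0 \<Longrightarrow> \<exists>\<delta>>0. \<forall>y\<in>S. \<bar>y - x0\<bar> < \<delta> \<longrightarrow> P \<epsilon> y x0"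
    and tri: "\<And>\<epsilon> y z x0. P (\<epsilon>/2) y x0 \<Longrightarrow> P (\<epsilon>/2) z x0 \<Longrightarrow> P \<epsilon> y z"
    and "\<epsilon> > 0"
  shows "\<exists>\<delta>>0. \<forall>y\<in>S. \<forall>z\<in>S. \<bar>y - z\<bar> < \<delta> \<longrightarrow> P \<epsilon> y z"
proof -
  define dl where "dl x0 = (SOME \<delta>. \<delta> > 0 \<and> (\<forall>y\<in>S. \<bar>y - x0\<bar> < \<delta> \<longrightarrow> P (\<epsilon>/2) y x0))" for x0
  have dl: "dl x0 > 0 \<and> (\<forall>y\<in>S. \<bar>y - x0\<bar> < dl x0 \<longrightarrow> P (\<epsilon>/2) y x0)" if "x0 \<in> S" for x0
    unfolding dl_def by (rule someI_ex) (use pw[OF that, of "\<epsilon>/2"] assms(4) in auto)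
  define G where "G = (\<lambda>x0. ball x0 (dl x0)) ` S"
  have cov: "S \<subseteq> \<Union>G" unfolding G_def using dl by force
  have op: "\<And>B. B \<in> G \<Longrightarrow> open B" unfolding G_def by auto
  obtain e where e: "e > 0" "\<And>x. x \<in> S \<Longrightarrow> \<exists>B\<in>G. ball x e \<subseteq> B"
  proof (rule Heine_Borel_lemma[OF assms(1) cov op])
    fix \<epsilon>' :: real assume a: "0 < \<epsilon>'" "\<And>x. x \<in> S \<Longrightarrow> \<exists>G\<in>G. ball x \<epsilon>' \<subseteq> G"
    show thesis by (rule that[OF a])
  qed
  show ?thesis
  proof (intro exI[of _ e] conjI ballI impI)
    fix y z assume yz: "y \<in> S" "z \<in> S" "\<bar>y - z\<bar> < e"
    obtain B where B: "B \<in> G" "ball y e \<subseteq> B" using e(2)[OF yz(1)] by blast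
    then obtain x0 where x0: "x0 \<in> S" "B = ball x0 (dl x0)" unfolding G_def by auto
    have "y \<in> ball y e" using e(1) by simp
    then have "y \<in> ball x0 (dl x0)" using B x0 by blast
    moreover have "z \<in> ball x0 (dl x0)" using B x0 yz(3) by (auto simp: dist_real_def)
    ultimately have "P (\<epsilon>/2) y x0" "P (\<epsilon>/2) z x0" using dl[OF x0(1)] yz
      by (auto simp: dist_real_def abs_minus_commute)
    then show "P \<epsilon> y z" by (rule tri)
  qed (use e in auto)
qed

lemma supnorm_ge: "bdd_above (range (\<lambda>i. \<bar>s i\<bar>)) \<Longrightarrow> \<bar>s i\<bar> \<le> supnorm s"
  unfolding supnorm_def by (rule cSUP_upper) auto

lemma supnorm_le: "(\<And>i. \<bar>s i\<bar> \<le> c) \<Longrightarrow> supnorm s \<le> c"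
  unfolding supnorm_def by (rule cSUP_least) auto

lemma linf_posI: "(\<And>i. 0 \<le> s i) \<Longrightarrow> (\<And>i. s i \<le> B) \<Longrightarrow> s \<in> linf_pos"
  unfolding linf_pos_def bdd_above_def by auto

lemma linf_pos_nonneg: "s \<in> linf_pos \<Longrightarrow> 0 \<le> s i"
  unfolding linf_pos_def by auto

lemma linf_pos_bdd: "s \<in> linf_pos \<Longrightarrow> bdd_above (range (\<lambda>i. \<bar>s i\<bar>))"
  unfolding linf_pos_def by auto

lemma linf_pos_le_supnorm: "s \<in> linf_pos \<Longrightarrow> s i \<le> supnorm s"
  using supnorm_ge[OF linf_pos_bdd] by (metis abs_ge_self order_trans)

locale psd_setting =
  fixes Ii :: "'i::countable \<Rightarrow> 'i set"
    and gam :: "'i \<Rightarrow> 'i \<Rightarrow> real \<Rightarrow> real"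
    and mu :: "'i \<Rightarrow> ('i \<Rightarrow> real) \<Rightarrow> ereal"
    and \<sigma> :: "real \<Rightarrow> ('i \<Rightarrow> real)"
    and \<rho> :: "real \<Rightarrow> real"
    and \<phi>min :: "real \<Rightarrow> real"
    and \<phi>max :: "real \<Rightarrow> real"
  assumes gain: "gain_operator Ii gam mu"
    and range: "\<forall>r\<ge>0. \<sigma> r \<in> linf_pos"
    and cont: "\<forall>r0\<ge>0. \<forall>\<epsilon>>0. \<exists>\<delta>>0. \<forall>r\<ge>0. \<bar>r - r0\<bar> < \<delta> \<longrightarrow> supnorm (\<sigma> r - \<sigma> r0) < \<epsilon>"
    and incr: "\<forall>r1 r2. 0 \<le> r1 \<longrightarrow> r1 \<le> r2 \<longrightarrow> \<sigma> r1 \<le> \<sigma> r2"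
    and rhoK: "class_Kinf \<rho>"
    and decay: "\<forall>r\<ge>0. Gain_rho Ii gam mu \<rho> (\<sigma> r) \<le> \<sigma> r"
    and phiK: "class_Kinf \<phi>min" "class_Kinf \<phi>max"
    and bnds: "\<forall>r\<ge>0. (\<lambda>_. \<phi>min r) \<le> \<sigma> r \<and> \<sigma> r \<le> (\<lambda>_. \<phi>max r)"
begin

definition vec :: "'i \<Rightarrow> ('i \<Rightarrow> real) \<Rightarrow> ('i \<Rightarrow> real)" where
  "vec i s = (\<lambda>j. if j \<in> Ii i then gam i j (s j) else 0)"

lemmas G = gain[unfolded gain_operator_def]
lemmas G1 = G[THEN conjunct1]
lemmas G2 = G[THEN conjunct2, THEN conjunct1]
lemmas G3 = G[THEN conjunct2, THEN conjunct2, THEN conjunct1]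
lemmas G4 = G[THEN conjunct2, THEN conjunct2, THEN conjunct2, THEN conjunct1]
lemmas G5 = G[THEN conjunct2, THEN conjunct2, THEN conjunct2, THEN conjunct2, THEN conjunct1]
lemmas G6 = G[THEN conjunct2, THEN conjunct2, THEN conjunct2, THEN conjunct2, THEN conjunct2, THEN conjunct1]
lemmas G7 = G[THEN conjunct2, THEN conjunct2, THEN conjunct2, THEN conjunct2, THEN conjunct2, THEN conjunct2, THEN conjunct1]
lemmas G8 = G[THEN conjunct2, THEN conjunct2, THEN conjunct2, THEN conjunct2, THEN conjunct2, THEN conjunct2, THEN conjunct2, THEN conjunct1]

lemma finI: "finite (Ii i)" and notin: "i \<notin> Ii i"
  using G1 by auto

lemma gamK: "j \<in> Ii i \<Longrightarrow> class_K (gam i j)"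
  using G2 by (auto intro: Kinf_K)

lemma equi: "r0 \<ge> 0 \<Longrightarrow> \<epsilon> > 0 \<Longrightarrow> \<exists>\<delta>>0. \<forall>i. \<forall>j\<in>Ii i. \<forall>r\<ge>0.
         \<bar>r - r0\<bar> \<le> \<delta> \<longrightarrow> \<bar>gam i j r - gam i j r0\<bar> \<le> \<epsilon>"
  using G3 by blast

lemma M1: "\<exists>\<xi>. class_Kinf \<xi> \<and> (\<forall>i. mu i (\<lambda>_. 0) = 0 \<and>
         (\<forall>s\<in>linf_pos. ereal (\<xi> (supnorm s)) \<le> mu i s))"
  using G5 by blast

lemma M2: "s1 \<in> linf_pos \<Longrightarrow> s2 \<in> linf_pos \<Longrightarrow> s1 \<le> s2 \<Longrightarrow> mu i s1 \<le> mu i s2"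
  using G6 by blast

lemma M3: assumes "finite J" "s \<in> linf_pos" "(\<forall>k. k \<notin> J \<longrightarrow> s k = 0)" shows "\<bar>mu i s\<bar> \<noteq> \<infinity>"
proof -
  note h = conjunct1[OF G7[rule_format, of J i, OF assms(1)]]
  have "s \<in> {s\<in>linf_pos. \<forall>k. k \<notin> J \<longrightarrow> s k = 0}" using assms(2,3) by blast
  note hh = bspec[OF h this]
  show ?thesis using hh by assumption
qed

lemma M4: "A \<subseteq> linf_pos \<Longrightarrow> bdd_above (supnorm ` A) \<Longrightarrow> \<epsilon> > 0 \<Longrightarrow>
   \<exists>\<delta>>0. \<forall>s0\<in>A. \<forall>s\<in>linf_pos. supnorm (s - s0) \<le> \<delta> \<longrightarrow>
           (\<forall>i. \<bar>mu i (restr s (Ii i)) - mu i (restr s0 (Ii i))\<bar> \<le> ereal \<epsilon>)"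
  using G8 by blast

lemma mu_nonneg: "s \<in> linf_pos \<Longrightarrow> 0 \<le> mu i s"
  using G4 by blast

lemma vec_nonneg: "(\<And>j. 0 \<le> s j) \<Longrightarrow> 0 \<le> vec i s j"
  unfolding vec_def using K_nonneg[OF gamK] by auto

lemma vec_linf: assumes "\<And>j. 0 \<le> s j" shows "vec i s \<in> linf_pos"
proof (rule linf_posI)
  show "0 \<le> vec i s j" for j using vec_nonneg assms by auto
  have fin: "finite ((\<lambda>j. gam i j (s j)) ` Ii i)" using finI by auto
  show "vec i s j \<le> Max (insert 0 ((\<lambda>j. gam i j (s j)) ` Ii i))" for j
  proof (cases "j \<in> Ii i")
    case True
    then have "gam i j (s j) \<in> insert 0 ((\<lambda>j. gam i j (s j)) ` Ii i)" by blast
    then show ?thesis unfolding vec_def using True fin by (simp add: Max_ge)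
  next
    case False
    then show ?thesis unfolding vec_def using fin by (simp add: Max_ge)
  qed
qed

lemma vec_supp: "k \<notin> Ii i \<Longrightarrow> vec i s k = 0"
  unfolding vec_def by auto

lemma restr_vec: "restr (vec i s) (Ii i) = vec i s"
  unfolding restr_def vec_def by auto

lemma mu_vec_fin: assumes "\<And>j. 0 \<le> s j" shows "\<bar>mu i (vec i s)\<bar> \<noteq> \<infinity>"
  by (rule M3[OF finI[of i] vec_linf[OF assms]]) (simp add: vec_supp)

lemma Gain_eq: "Gain Ii gam mu s i = real_of_ereal (mu i (vec i s))"
  unfolding Gain_def vec_def by simp

lemma Gain_ereal: "(\<And>j. 0 \<le> s j) \<Longrightarrow> ereal (Gain Ii gam mu s i) = mu i (vec i s)"
  unfolding Gain_eq using mu_vec_fin by (simp add: ereal_real)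

lemma vec_zero: "vec i (\<lambda>_. 0) = (\<lambda>_. 0)"
  unfolding vec_def using K_zero[OF gamK] by auto

lemma Gain_zero: "Gain Ii gam mu (\<lambda>_. 0) i = 0"
  using M1 unfolding Gain_eq vec_zero by auto

lemma vec_mono:
  assumes "\<And>j. 0 \<le> s1 j" "\<And>j. s1 j \<le> s2 j"
  shows "vec i s1 \<le> vec i s2"
  unfolding le_fun_def
proof
  fix j show "vec i s1 j \<le> vec i s2 j"
  proof (cases "j \<in> Ii i")
    case True
    then show ?thesis unfolding vec_def using K_mono[OF gamK[OF True] assms(1)[of j] assms(2)[of j]] by simp
  qed (simp add: vec_def)
qed

lemma Gain_mono:
  assumes "\<And>j. 0 \<le> s1 j" "\<And>j. s1 j \<le> s2 j"
  shows "Gain Ii gam mu s1 i \<le> Gain Ii gam mu s2 i"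
proof -
  have s2: "0 \<le> s2 j" for j using assms(1)[of j] assms(2)[of j] by linarith
  have "mu i (vec i s1) \<le> mu i (vec i s2)"
    by (rule M2[OF vec_linf[OF assms(1)] vec_linf[OF s2] vec_mono[OF assms]])
  then show ?thesis unfolding Gain_ereal[OF assms(1), where i=i, symmetric] Gain_ereal[OF s2, where i=i, symmetric] by simp
qed

lemma Gain_nonneg: "(\<And>j. 0 \<le> s j) \<Longrightarrow> 0 \<le> Gain Ii gam mu s i"
  using Gain_mono[of "\<lambda>_. 0" s i] by (simp add: Gain_zero)

lemma xi_bound: obtains \<xi> where "class_Kinf \<xi>"
   "\<And>s i. (\<And>j. 0 \<le> s j) \<Longrightarrow> \<xi> (supnorm (vec i s)) \<le> Gain Ii gam mu s i"
proof -
  obtain \<xi> where \<xi>: "class_Kinf \<xi>" "\<forall>i. \<forall>s\<in>linf_pos. ereal (\<xi> (supnorm s)) \<le> mu i s"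
    using M1 by blast
  show ?thesis
  proof (rule that[OF \<xi>(1)])
    fix s :: "'i \<Rightarrow> real" and i assume a: "\<And>j. 0 \<le> s j"
    have "ereal (\<xi> (supnorm (vec i s))) \<le> mu i (vec i s)"
      using bspec[OF spec[OF \<xi>(2), of i] vec_linf[OF a]] .
    then show "\<xi> (supnorm (vec i s)) \<le> Gain Ii gam mu s i"
      unfolding Gain_ereal[OF a, where i=i, symmetric] by simp
  qed
qed

lemma sigma_linf: "r \<ge> 0 \<Longrightarrow> \<sigma> r \<in> linf_pos"
  using range by simp

lemma sigma_nonneg: "r \<ge> 0 \<Longrightarrow> 0 \<le> \<sigma> r j"
  by (rule linf_pos_nonneg[OF sigma_linf])

lemma sigma_lo: "r \<ge> 0 \<Longrightarrow> \<phi>min r \<le> \<sigma> r j"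
  using bnds by (auto simp: le_fun_def)

lemma sigma_hi: "r \<ge> 0 \<Longrightarrow> \<sigma> r j \<le> \<phi>max r"
  using bnds by (auto simp: le_fun_def)

lemma sigma_mono: "0 \<le> r1 \<Longrightarrow> r1 \<le> r2 \<Longrightarrow> \<sigma> r1 j \<le> \<sigma> r2 j"
  using incr by (auto simp: le_fun_def)

lemma decay_i: "r \<ge> 0 \<Longrightarrow> Gain Ii gam mu (\<sigma> r) i + \<rho> (Gain Ii gam mu (\<sigma> r) i) \<le> \<sigma> r i"
  using decay unfolding Gain_rho_def le_fun_def by auto

end

lemma Kinf_comp:
  assumes "class_Kinf f" "class_Kinf g"
  shows "class_Kinf (\<lambda>x. f (g x))"
proof (rule KinfI)
  have "g ` {0..} \<subseteq> {0..}" using K_nonneg[OF Kinf_K[OF assms(2)]] by auto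
  then show "continuous_on {0..} (\<lambda>x. f (g x))"
    by (rule continuous_on_compose2[OF K_cont[OF Kinf_K[OF assms(1)]] K_cont[OF Kinf_K[OF assms(2)]]])
  show "\<And>x y. 0 \<le> x \<Longrightarrow> x < y \<Longrightarrow> f (g x) < f (g y)"
    using K_strict[OF Kinf_K[OF assms(1)]] K_strict[OF Kinf_K[OF assms(2)]] K_nonneg[OF Kinf_K[OF assms(2)]]
    by blast
  show "f (g 0) = 0" using K_zero[OF Kinf_K[OF assms(1)]] K_zero[OF Kinf_K[OF assms(2)]] by simp
  fix M
  obtain r where r: "r \<ge> 0" "M < f r" using assms(1) unfolding class_Kinf_def by blast
  obtain s where s: "s \<ge> 0" "r < g s" using assms(2) unfolding class_Kinf_def by blast
  have "f r \<le> f (g s)" using K_mono[OF Kinf_K[OF assms(1)] r(1)] s(2) by simp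
  then show "\<exists>r\<ge>0. M < f (g r)" using r s by (intro exI[of _ s]) auto
qed

lemma linf_diff_le: "s1 \<in> linf_pos \<Longrightarrow> s2 \<in> linf_pos \<Longrightarrow> \<bar>s1 j - s2 j\<bar> \<le> supnorm (s1 - s2)"
proof -
  assume a: "s1 \<in> linf_pos" "s2 \<in> linf_pos"
  obtain B1 where "\<forall>i. \<bar>s1 i\<bar> \<le> B1" using linf_pos_bdd[OF a(1)] unfolding bdd_above_def by auto
  moreover obtain B2 where "\<forall>i. \<bar>s2 i\<bar> \<le> B2" using linf_pos_bdd[OF a(2)] unfolding bdd_above_def by auto
  ultimately have "bdd_above (range (\<lambda>i. \<bar>(s1 - s2) i\<bar>))"
    unfolding bdd_above_def by (intro exI[of _ "B1 + B2"]) (auto intro: order_trans[OF abs_triangle_ineq4] add_mono)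
  then show ?thesis using supnorm_ge[of "s1 - s2" j] by simp
qed

context psd_setting begin

definition GR :: "('i \<Rightarrow> real) \<Rightarrow> 'i \<Rightarrow> real" where
  "GR s i = Gain Ii gam mu s i + \<rho> (Gain Ii gam mu s i) / 2"

definition cc :: "real \<Rightarrow> real" where
  "cc t = min (\<rho> (\<phi>min t / 4) / 2) (\<phi>min t / 4) / 2"

lemma ccK: "class_Kinf cc"
proof -
  have a: "class_Kinf (\<lambda>t. \<phi>min (t) / 4)"
    using Kinf_scale[OF phiK(1), of "1/4"] by simp
  have b: "class_Kinf (\<lambda>t. \<rho> (\<phi>min t / 4) / 2)"
    using Kinf_scale[OF Kinf_comp[OF rhoK a], of "1/2"] by simp
  have "class_Kinf (\<lambda>t. min (\<rho> (\<phi>min t / 4) / 2) (\<phi>min t / 4))"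
    by (rule Kinf_min[OF b a])
  from Kinf_scale[OF this, of "1/2"] show ?thesis unfolding cc_def by simp
qed

lemma cc_le: "t \<ge> 0 \<Longrightarrow> cc t \<le> \<phi>min t / 8"
  unfolding cc_def by simp

lemma slack:
  assumes t: "t \<ge> 0"
  shows "GR (\<sigma> t) i \<le> \<sigma> t i - 2 * cc t"
proof -
  define g where "g = Gain Ii gam mu (\<sigma> t) i"
  define m where "m = \<phi>min t"
  have g0: "g \<ge> 0" unfolding g_def by (rule Gain_nonneg[OF sigma_nonneg[OF t]])
  have m0: "m \<ge> 0" unfolding m_def using K_nonneg[OF Kinf_K[OF phiK(1)] t] .
  have s1: "g + \<rho> g \<le> \<sigma> t i" unfolding g_def using decay_i[OF t] .
  have s2: "m \<le> \<sigma> t i" unfolding m_def using sigma_lo[OF t] .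
  have rg: "\<rho> g \<ge> 0" using K_nonneg[OF Kinf_K[OF rhoK] g0] .
  have "\<sigma> t i - g - \<rho> g / 2 \<ge> min (\<rho> (m / 4) / 2) (m / 4)"
  proof (cases "g \<ge> m / 4")
    case True
    then have "\<rho> (m/4) \<le> \<rho> g" using K_mono[OF Kinf_K[OF rhoK]] m0 by simp
    then show ?thesis using s1 by linarith
  next
    case False
    then show ?thesis
    proof (cases "\<rho> g / 2 \<ge> m / 4")
      case True then show ?thesis using s1 by linarith
    next
      case False then show ?thesis using s2 \<open>\<not> g \<ge> m/4\<close> m0 by linarith
    qed
  qed
  then show ?thesis unfolding GR_def cc_def g_def[symmetric] m_def[symmetric] by linarith
qed

lemma GR_mono:
  assumes "\<And>j. 0 \<le> s1 j" "\<And>j. s1 j \<le> s2 j"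
  shows "GR s1 i \<le> GR s2 i"
proof -
  have "Gain Ii gam mu s1 i \<le> Gain Ii gam mu s2 i" by (rule Gain_mono[OF assms])
  moreover have "\<rho> (Gain Ii gam mu s1 i) \<le> \<rho> (Gain Ii gam mu s2 i)"
    by (rule K_mono[OF Kinf_K[OF rhoK] Gain_nonneg[OF assms(1)] calculation])
  ultimately show ?thesis unfolding GR_def by simp
qed

lemma GR_zero: "GR (\<lambda>_. 0) i = 0"
  unfolding GR_def Gain_zero using K_zero[OF Kinf_K[OF rhoK]] by simp

lemma GR_eq: "Gain_rho Ii gam mu (\<lambda>x. \<rho> x / 2) s = GR s"
  unfolding Gain_rho_def GR_def by auto

end

context psd_setting begin

lemma sigma_ucont:
  assumes "B \<ge> 0" "\<epsilon> > 0"
  shows "\<exists>\<delta>>0. \<forall>y\<in>{0..B}. \<forall>z\<in>{0..B}. \<bar>y - z\<bar> < \<delta> \<longrightarrow> (\<forall>j. \<bar>\<sigma> y j - \<sigma> z j\<bar> \<le> \<epsilon>)"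
proof (rule uniform_from_pointwise[where P = "\<lambda>\<epsilon> y z. \<forall>j. \<bar>\<sigma> y j - \<sigma> z j\<bar> \<le> \<epsilon>"])
  show "compact {0..B}" by simp
  show "\<epsilon> > 0" by fact
  fix x0 e :: real assume x0: "x0 \<in> {0..B}" and e: "e > 0"
  obtain d where d: "d > 0" "\<forall>r\<ge>0. \<bar>r - x0\<bar> < d \<longrightarrow> supnorm (\<sigma> r - \<sigma> x0) < e"
    using cont[rule_format, of x0 e] x0 e by auto
  show "\<exists>\<delta>>0. \<forall>y\<in>{0..B}. \<bar>y - x0\<bar> < \<delta> \<longrightarrow> (\<forall>j. \<bar>\<sigma> y j - \<sigma> x0 j\<bar> \<le> e)"
  proof (intro exI[of _ d] conjI ballI impI allI)
    fix y j assume y: "y \<in> {0..B}" "\<bar>y - x0\<bar> < d"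
    have "\<bar>\<sigma> y j - \<sigma> x0 j\<bar> \<le> supnorm (\<sigma> y - \<sigma> x0)"
      by (rule linf_diff_le[OF sigma_linf sigma_linf]) (use x0 y in auto)
    also have "\<dots> < e" using d y by auto
    finally show "\<bar>\<sigma> y j - \<sigma> x0 j\<bar> \<le> e" by simp
  qed (use d in auto)
next
  fix e y z x0 :: real
  assume "\<forall>j. \<bar>\<sigma> y j - \<sigma> x0 j\<bar> \<le> e / 2" "\<forall>j. \<bar>\<sigma> z j - \<sigma> x0 j\<bar> \<le> e / 2"
  then show "\<forall>j. \<bar>\<sigma> y j - \<sigma> z j\<bar> \<le> e"
  proof (intro allI)
    fix j assume a: "\<forall>j. \<bar>\<sigma> y j - \<sigma> x0 j\<bar> \<le> e / 2" "\<forall>j. \<bar>\<sigma> z j - \<sigma> x0 j\<bar> \<le> e / 2"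
    from a(1)[rule_format, of j] a(2)[rule_format, of j] show "\<bar>\<sigma> y j - \<sigma> z j\<bar> \<le> e" by linarith
  qed
qed

lemma gam_ucont:
  assumes "R \<ge> 0" "\<epsilon> > 0"
  shows "\<exists>\<delta>>0. \<forall>y\<in>{0..R}. \<forall>z\<in>{0..R}. \<bar>y - z\<bar> < \<delta> \<longrightarrow> (\<forall>i. \<forall>j\<in>Ii i. \<bar>gam i j y - gam i j z\<bar> \<le> \<epsilon>)"
proof (rule uniform_from_pointwise[where P = "\<lambda>\<epsilon> y z. \<forall>i. \<forall>j\<in>Ii i. \<bar>gam i j y - gam i j z\<bar> \<le> \<epsilon>"])
  show "compact {0..R}" by simp
  show "\<epsilon> > 0" by fact
  fix x0 e :: real assume x0: "x0 \<in> {0..R}" and e: "e > 0"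
  obtain d where d: "d > 0" "\<forall>i. \<forall>j\<in>Ii i. \<forall>r\<ge>0. \<bar>r - x0\<bar> \<le> d \<longrightarrow> \<bar>gam i j r - gam i j x0\<bar> \<le> e"
    using equi[of x0 e] x0 e by auto
  show "\<exists>\<delta>>0. \<forall>y\<in>{0..R}. \<bar>y - x0\<bar> < \<delta> \<longrightarrow> (\<forall>i. \<forall>j\<in>Ii i. \<bar>gam i j y - gam i j x0\<bar> \<le> e)"
    using d by (intro exI[of _ d]) auto
next
  fix e y z x0 :: real
  assume "\<forall>i. \<forall>j\<in>Ii i. \<bar>gam i j y - gam i j x0\<bar> \<le> e / 2" "\<forall>i. \<forall>j\<in>Ii i. \<bar>gam i j z - gam i j x0\<bar> \<le> e / 2"
  then show "\<forall>i. \<forall>j\<in>Ii i. \<bar>gam i j y - gam i j z\<bar> \<le> e"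
  proof (intro allI ballI)
    fix i j assume a: "\<forall>i. \<forall>j\<in>Ii i. \<bar>gam i j y - gam i j x0\<bar> \<le> e / 2" "\<forall>i. \<forall>j\<in>Ii i. \<bar>gam i j z - gam i j x0\<bar> \<le> e / 2"
      and j: "j \<in> Ii i"
    from a(1)[rule_format, OF j] a(2)[rule_format, OF j] show "\<bar>gam i j y - gam i j z\<bar> \<le> e" by linarith
  qed
qed


lemma Gain_le: assumes "x \<ge> 0" shows "Gain Ii gam mu (\<sigma> x) i \<le> \<sigma> x i"
proof -
  have "0 \<le> \<rho> (Gain Ii gam mu (\<sigma> x) i)"
    by (rule K_nonneg[OF Kinf_K[OF rhoK] Gain_nonneg[OF sigma_nonneg[OF assms]]])
  then show ?thesis using decay_i[OF assms, of i] by linarith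
qed

lemma vec_bound:
  assumes "B \<ge> 0"
  obtains R0 where "R0 \<ge> 0" "\<And>i x. x \<in> {0..B} \<Longrightarrow> supnorm (vec i (\<sigma> x)) \<le> R0"
proof -
  obtain \<xi> where \<xi>: "class_Kinf \<xi>"
    "\<And>s i. (\<And>j. 0 \<le> s j) \<Longrightarrow> \<xi> (supnorm (vec i s)) \<le> Gain Ii gam mu s i"
    using xi_bound by blast
  obtain r where r: "r \<ge> 0" "\<forall>x\<ge>r. \<phi>max B < \<xi> x" using Kinf_big[OF \<xi>(1)] by blast
  show ?thesis
  proof (rule that[OF r(1)])
    fix i x assume x: "x \<in> {0..B}"
    show "supnorm (vec i (\<sigma> x)) \<le> r"
    proof (rule ccontr)
      assume "\<not> supnorm (vec i (\<sigma> x)) \<le> r"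
      then have "\<phi>max B < \<xi> (supnorm (vec i (\<sigma> x)))" using r by auto
      also have "\<dots> \<le> Gain Ii gam mu (\<sigma> x) i" using \<xi>(2)[OF sigma_nonneg] x by auto
      also have "\<dots> \<le> \<sigma> x i" using Gain_le x by auto
      also have "\<dots> \<le> \<phi>max x" using sigma_hi x by auto
      also have "\<dots> \<le> \<phi>max B" using K_mono[OF Kinf_K[OF phiK(2)]] x by auto
      finally show False by simp
    qed
  qed
qed

lemma GR_ucont:
  assumes "B0 \<ge> 0" "\<eta> > 0"
  shows "\<exists>h>0. \<forall>x\<in>{0..B0}. \<forall>x'. x \<le> x' \<longrightarrow> x' \<le> x + h \<longrightarrow> (\<forall>i. GR (\<sigma> x') i \<le> GR (\<sigma> x) i + \<eta>)"
proof -
  define B where "B = B0 + 1"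
  have B: "B \<ge> 0" using assms unfolding B_def by simp
  define G0 where "G0 = \<phi>max B"
  have G0: "G0 \<ge> 0" unfolding G0_def using K_nonneg[OF Kinf_K[OF phiK(2)] B] .
  have "uniformly_continuous_on {0..G0} \<rho>"
    by (rule compact_uniformly_continuous[OF continuous_on_subset[OF K_cont[OF Kinf_K[OF rhoK]]]]) auto
  then obtain d\<rho> where d\<rho>: "d\<rho> > 0" "\<forall>x\<in>{0..G0}. \<forall>x'\<in>{0..G0}. dist x' x < d\<rho> \<longrightarrow> dist (\<rho> x') (\<rho> x) < \<eta>"
    unfolding uniformly_continuous_on_def using assms(2) by blast
  define \<eta>' where "\<eta>' = min (\<eta>/2) (d\<rho>/2)"
  have \<eta>': "\<eta>' > 0" unfolding \<eta>'_def using assms d\<rho> by simp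
  define A where "A = (\<lambda>(i,x). vec i (\<sigma> x)) ` (UNIV \<times> {0..B})"
  have Asub: "A \<subseteq> linf_pos" unfolding A_def using vec_linf sigma_nonneg by auto
  obtain R0 where R0: "R0 \<ge> 0" "\<And>i x. x \<in> {0..B} \<Longrightarrow> supnorm (vec i (\<sigma> x)) \<le> R0"
    using vec_bound[OF B] by blast
  have Abdd: "bdd_above (supnorm ` A)" unfolding A_def bdd_above_def using R0(2) by (intro exI[of _ R0]) auto
  obtain \<delta>4 where \<delta>4: "\<delta>4 > 0" "\<forall>s0\<in>A. \<forall>s\<in>linf_pos. supnorm (s - s0) \<le> \<delta>4 \<longrightarrow>
           (\<forall>i. \<bar>mu i (restr s (Ii i)) - mu i (restr s0 (Ii i))\<bar> \<le> ereal \<eta>')"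
    using M4[OF Asub Abdd \<eta>'] by blast
  obtain \<delta>g where \<delta>g: "\<delta>g > 0" "\<forall>y\<in>{0..G0}. \<forall>z\<in>{0..G0}. \<bar>y - z\<bar> < \<delta>g \<longrightarrow> (\<forall>i. \<forall>j\<in>Ii i. \<bar>gam i j y - gam i j z\<bar> \<le> \<delta>4)"
    using gam_ucont[OF G0 \<delta>4(1)] by blast
  obtain \<delta>\<sigma> where \<delta>\<sigma>: "\<delta>\<sigma> > 0" "\<forall>y\<in>{0..B}. \<forall>z\<in>{0..B}. \<bar>y - z\<bar> < \<delta>\<sigma> \<longrightarrow> (\<forall>j. \<bar>\<sigma> y j - \<sigma> z j\<bar> \<le> \<delta>g/2)"
    using sigma_ucont[OF B, of "\<delta>g/2"] \<delta>g(1) by auto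
  define h where "h = min (\<delta>\<sigma>/2) 1"
  have h: "h > 0" unfolding h_def using \<delta>\<sigma> by simp
  show ?thesis
  proof (intro exI[of _ h] conjI h ballI allI impI)
    fix x x' i assume x: "x \<in> {0..B0}" and xx: "x \<le> x'" "x' \<le> x + h"
    have xB: "x \<in> {0..B}" and x'B: "x' \<in> {0..B}" using x xx h unfolding B_def h_def by auto
    have "\<bar>x' - x\<bar> < \<delta>\<sigma>" using xx h \<delta>\<sigma>(1) unfolding h_def by auto
    then have sd: "\<bar>\<sigma> x' j - \<sigma> x j\<bar> \<le> \<delta>g/2" for j using \<delta>\<sigma>(2) xB x'B by blast
    have sG: "\<sigma> y j \<in> {0..G0}" if "y \<in> {0..B}" for y j
      using sigma_nonneg[of y j] sigma_hi[of y j] K_mono[OF Kinf_K[OF phiK(2)], of y B] that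
      unfolding G0_def by auto
    have vd: "\<bar>(vec i (\<sigma> x') - vec i (\<sigma> x)) j\<bar> \<le> \<delta>4" for j
    proof (cases "j \<in> Ii i")
      case True
      have "\<bar>\<sigma> x' j - \<sigma> x j\<bar> < \<delta>g" using sd[of j] \<delta>g(1) by linarith
      then have "\<bar>gam i j (\<sigma> x' j) - gam i j (\<sigma> x j)\<bar> \<le> \<delta>4"
        using \<delta>g(2) sG[OF xB, of j] sG[OF x'B, of j] True by blast
      then show ?thesis using True unfolding vec_def by simp
    next
      case False then show ?thesis unfolding vec_def using \<delta>4(1) by simp
    qed
    have "supnorm (vec i (\<sigma> x') - vec i (\<sigma> x)) \<le> \<delta>4" by (rule supnorm_le[OF vd])
    moreover have "vec i (\<sigma> x) \<in> A" unfolding A_def using xB by auto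
    moreover have "vec i (\<sigma> x') \<in> linf_pos" using vec_linf sigma_nonneg x'B by auto
    ultimately have "\<bar>mu i (restr (vec i (\<sigma> x')) (Ii i)) - mu i (restr (vec i (\<sigma> x)) (Ii i))\<bar> \<le> ereal \<eta>'"
      using \<delta>4(2) by blast
    then have hh: "\<bar>mu i (vec i (\<sigma> x')) - mu i (vec i (\<sigma> x))\<bar> \<le> ereal \<eta>'"
      unfolding restr_vec .
    have e1: "ereal (Gain Ii gam mu (\<sigma> x') i) = mu i (vec i (\<sigma> x'))"
      by (rule Gain_ereal) (use sigma_nonneg x'B in auto)
    have e2: "ereal (Gain Ii gam mu (\<sigma> x) i) = mu i (vec i (\<sigma> x))"
      by (rule Gain_ereal) (use sigma_nonneg xB in auto)
    have gd: "\<bar>Gain Ii gam mu (\<sigma> x') i - Gain Ii gam mu (\<sigma> x) i\<bar> \<le> \<eta>'"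
      using hh unfolding e1[symmetric] e2[symmetric] by simp
    have gG: "Gain Ii gam mu (\<sigma> y) i \<in> {0..G0}" if "y \<in> {0..B}" for y
    proof -
      have "0 \<le> Gain Ii gam mu (\<sigma> y) i" by (rule Gain_nonneg) (use sigma_nonneg that in auto)
      then show ?thesis using Gain_le[of y i] sG[OF that, of i] that by auto
    qed
    have "dist (Gain Ii gam mu (\<sigma> x') i) (Gain Ii gam mu (\<sigma> x) i) < d\<rho>"
      using gd d\<rho>(1) unfolding \<eta>'_def dist_real_def by linarith
    then have "dist (\<rho> (Gain Ii gam mu (\<sigma> x') i)) (\<rho> (Gain Ii gam mu (\<sigma> x) i)) < \<eta>"
      using d\<rho>(2) gG[OF xB] gG[OF x'B] by blast
    then show "GR (\<sigma> x') i \<le> GR (\<sigma> x) i + \<eta>"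
      using gd unfolding GR_def dist_real_def \<eta>'_def by linarith
  qed
qed


lemma adm:
  assumes "0 < \<alpha>" "\<alpha> \<le> \<beta>"
  shows "\<exists>h>0. \<forall>x\<in>{\<alpha>..\<beta>}. \<forall>x'. x \<le> x' \<longrightarrow> x' \<le> x + h \<longrightarrow> (\<forall>i. GR (\<sigma> x') i \<le> \<sigma> x i - cc x)"
proof -
  have c: "cc \<alpha> > 0" using K_pos[OF Kinf_K[OF ccK] assms(1)] .
  obtain h where h: "h > 0" "\<forall>x\<in>{0..\<beta>}. \<forall>x'. x \<le> x' \<longrightarrow> x' \<le> x + h \<longrightarrow> (\<forall>i. GR (\<sigma> x') i \<le> GR (\<sigma> x) i + cc \<alpha>)"
    using GR_ucont[of \<beta> "cc \<alpha>"] c assms by auto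
  show ?thesis
  proof (intro exI[of _ h] conjI h(1) ballI allI impI)
    fix x x' i assume x: "x \<in> {\<alpha>..\<beta>}" and xx: "x \<le> x'" "x' \<le> x + h"
    have "GR (\<sigma> x') i \<le> GR (\<sigma> x) i + cc \<alpha>" using h(2) x xx assms by auto
    moreover have "GR (\<sigma> x) i \<le> \<sigma> x i - 2 * cc x" using slack[of x i] x assms by auto
    moreover have "cc \<alpha> \<le> cc x" using K_mono[OF Kinf_K[OF ccK], of \<alpha> x] x assms by auto
    ultimately show "GR (\<sigma> x') i \<le> \<sigma> x i - cc x" by linarith
  qed
qed

end

context psd_setting begin

definition ee :: "real \<Rightarrow> real" where
  "ee u = Inf ((\<lambda>s. cc s + max 0 (\<phi>min u - \<phi>max s)) ` {0..u})"

definition dd :: "real \<Rightarrow> real" where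
  "dd u = ee u * (u / (1 + u))"

definition aa :: "real \<Rightarrow> 'i \<Rightarrow> real" where
  "aa t i = dd t + Inf ((\<lambda>u. \<sigma> u i - ee u) ` {t..})"

lemma cc_nonneg: "s \<ge> 0 \<Longrightarrow> 0 \<le> cc s"
  using K_nonneg[OF Kinf_K[OF ccK]] .

lemma phi_le: "u \<ge> 0 \<Longrightarrow> \<phi>min u \<le> \<phi>max u"
  using sigma_lo[of u undefined] sigma_hi[of u undefined] by linarith

lemma ee_bdd: "bdd_below ((\<lambda>s. cc s + max 0 (\<phi>min u - \<phi>max s)) ` {0..u})"
  unfolding bdd_below_def using cc_nonneg by (intro exI[of _ 0]) fastforce

lemma ee_nonneg: "u \<ge> 0 \<Longrightarrow> 0 \<le> ee u"
  unfolding ee_def using cc_nonneg by (intro cINF_greatest) fastforce+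

lemma ee_le: "0 \<le> s \<Longrightarrow> s \<le> u \<Longrightarrow> ee u \<le> cc s + max 0 (\<phi>min u - \<phi>max s)"
  unfolding ee_def by (rule cINF_lower[OF ee_bdd]) auto

lemma ee_le_cc: "u \<ge> 0 \<Longrightarrow> ee u \<le> cc u"
  using ee_le[of u u] phi_le[of u] by auto

lemma ee_mono:
  assumes "0 \<le> u" "u \<le> u'"
  shows "ee u \<le> ee u'"
  unfolding ee_def[of u']
proof (rule cINF_greatest)
  show "{0..u'} \<noteq> {}" using assms by auto
  fix s assume s: "s \<in> {0..u'}"
  show "ee u \<le> cc s + max 0 (\<phi>min u' - \<phi>max s)"
  proof (cases "s \<le> u")
    case True
    have "ee u \<le> cc s + max 0 (\<phi>min u - \<phi>max s)" using ee_le[of s u] s True by auto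
    moreover have "\<phi>min u \<le> \<phi>min u'" using K_mono[OF Kinf_K[OF phiK(1)]] assms by auto
    ultimately show ?thesis by linarith
  next
    case False
    have "ee u \<le> cc u" using ee_le_cc assms by auto
    also have "\<dots> \<le> cc s" using K_mono[OF Kinf_K[OF ccK], of u s] False assms by auto
    finally show ?thesis by linarith
  qed
qed

lemma ee_pos:
  assumes "u > 0"
  shows "ee u > 0"
proof -
  define y where "y = \<phi>min u"
  have y: "y > 0" unfolding y_def using K_pos[OF Kinf_K[OF phiK(1)] assms] .
  obtain \<delta> where \<delta>: "\<delta> > 0" "\<forall>x. 0 \<le> x \<longrightarrow> x \<le> \<delta> \<longrightarrow> \<phi>max x < y/2"
    using K_small[OF Kinf_K[OF phiK(2)], of "y/2"] y by auto
  have c: "cc \<delta> > 0" using K_pos[OF Kinf_K[OF ccK] \<delta>(1)] .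
  have "min (y/2) (cc \<delta>) \<le> ee u"
    unfolding ee_def
  proof (rule cINF_greatest)
    show "{0..u} \<noteq> {}" using assms by auto
    fix s assume s: "s \<in> {0..u}"
    show "min (y/2) (cc \<delta>) \<le> cc s + max 0 (\<phi>min u - \<phi>max s)"
    proof (cases "s \<le> \<delta>")
      case True
      then have "\<phi>max s < y/2" using \<delta>(2) s by auto
      then show ?thesis using cc_nonneg[of s] s unfolding y_def by auto
    next
      case False
      then have "cc \<delta> \<le> cc s" using K_mono[OF Kinf_K[OF ccK], of \<delta> s] \<delta>(1) by auto
      then show ?thesis by auto
    qed
  qed
  moreover have "min (y/2) (cc \<delta>) > 0" using y c by auto
  ultimately show ?thesis by linarith
qed

lemma dd_nonneg: "t \<ge> 0 \<Longrightarrow> 0 \<le> dd t"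
  unfolding dd_def using ee_nonneg by auto

lemma dd_le: "t \<ge> 0 \<Longrightarrow> dd t \<le> ee t"
proof -
  assume t: "t \<ge> 0"
  have "t / (1 + t) \<le> 1" using t by auto
  then show "dd t \<le> ee t" unfolding dd_def using ee_nonneg[OF t] mult_left_le by blast
qed

lemma dd_strict:
  assumes "0 \<le> t" "t < t'"
  shows "dd t < dd t'"
proof -
  have "t / (1 + t) < t' / (1 + t')" using assms by (simp add: field_simps)
  moreover have "ee t \<le> ee t'" using ee_mono assms by auto
  moreover have "ee t' > 0" using ee_pos assms by auto
  moreover have "t / (1 + t) \<ge> 0" using assms by auto
  ultimately have "ee t * (t / (1 + t)) < ee t' * (t' / (1 + t'))"
    by (meson mult_right_mono mult_strict_left_mono order_le_less_trans)
  then show ?thesis unfolding dd_def .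
qed

lemma key_low:
  assumes "0 \<le> t" "t \<le> u"
  shows "\<sigma> t i - cc t \<le> \<sigma> u i - ee u"
proof -
  have e: "ee u \<le> cc t + max 0 (\<phi>min u - \<phi>max t)" using ee_le assms by auto
  have "\<sigma> t i \<le> \<sigma> u i" using sigma_mono assms by auto
  moreover have "\<phi>min u \<le> \<sigma> u i" using sigma_lo assms by auto
  moreover have "\<sigma> t i \<le> \<phi>max t" using sigma_hi assms by auto
  ultimately show ?thesis using e by linarith
qed

lemma aa_bdd: "t \<ge> 0 \<Longrightarrow> bdd_below ((\<lambda>u. \<sigma> u i - ee u) ` {t..})"
  unfolding bdd_below_def using key_low by (intro exI[of _ "\<sigma> t i - cc t"]) fastforce

lemma aa_lo: "t \<ge> 0 \<Longrightarrow> \<sigma> t i - cc t \<le> aa t i"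
proof -
  assume t: "t \<ge> 0"
  have "\<sigma> t i - cc t \<le> Inf ((\<lambda>u. \<sigma> u i - ee u) ` {t..})"
    by (rule cINF_greatest) (use key_low t in auto)
  then show ?thesis unfolding aa_def using dd_nonneg[OF t] by linarith
qed

lemma aa_hi: "t \<ge> 0 \<Longrightarrow> aa t i \<le> \<sigma> t i"
proof -
  assume t: "t \<ge> 0"
  have "Inf ((\<lambda>u. \<sigma> u i - ee u) ` {t..}) \<le> \<sigma> t i - ee t"
    by (rule cINF_lower[OF aa_bdd[OF t]]) auto
  then show ?thesis unfolding aa_def using dd_le[OF t] by linarith
qed

lemma aa_incr:
  assumes "0 \<le> t" "t \<le> t'"
  shows "dd t' - dd t \<le> aa t' i - aa t i"
proof -
  have "Inf ((\<lambda>u. \<sigma> u i - ee u) ` {t..}) \<le> Inf ((\<lambda>u. \<sigma> u i - ee u) ` {t'..})"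
    by (rule cINF_superset_mono) (use aa_bdd[OF assms(1)] assms in auto)
  then show ?thesis unfolding aa_def by linarith
qed

lemma aa_nonneg: "t \<ge> 0 \<Longrightarrow> 0 \<le> aa t i"
proof -
  assume t: "t \<ge> 0"
  have "\<phi>min t \<le> \<sigma> t i" using sigma_lo t by auto
  moreover have "cc t \<le> \<phi>min t / 8" using cc_le t by auto
  moreover have "0 \<le> \<phi>min t" using K_nonneg[OF Kinf_K[OF phiK(1)] t] .
  ultimately show ?thesis using aa_lo[OF t, of i] by linarith
qed

lemma aa_le_phimax: "t \<ge> 0 \<Longrightarrow> aa t i \<le> \<phi>max t"
  using aa_hi sigma_hi by (meson order_trans)

lemma aa_ge_phimin: "t \<ge> 0 \<Longrightarrow> 7/8 * \<phi>min t \<le> aa t i"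
proof -
  assume t: "t \<ge> 0"
  have "\<phi>min t \<le> \<sigma> t i" using sigma_lo t by auto
  moreover have "cc t \<le> \<phi>min t / 8" using cc_le t by auto
  ultimately show ?thesis using aa_lo[OF t, of i] by linarith
qed

lemma aa_linf: "t \<ge> 0 \<Longrightarrow> aa t \<in> linf_pos"
  by (rule linf_posI[OF aa_nonneg aa_le_phimax]) auto

end

context psd_setting begin

definition Adm :: "real \<Rightarrow> real \<Rightarrow> bool" where
  "Adm x x' \<longleftrightarrow> (\<forall>i. GR (\<sigma> x') i \<le> \<sigma> x i - cc x)"

definition HH :: "nat \<Rightarrow> real" where
  "HH n = (SOME h. h > 0 \<and> (\<forall>x\<in>{1/(real n+1)..real n+1}. \<forall>x'. x \<le> x' \<longrightarrow> x' \<le> x + h \<longrightarrow> Adm x x'))"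

lemma HH: "HH n > 0 \<and> (\<forall>x\<in>{1/(real n+1)..real n+1}. \<forall>x'. x \<le> x' \<longrightarrow> x' \<le> x + HH n \<longrightarrow> Adm x x')"
proof -
  have "1/(real n+1) \<le> 1" by simp
  then have "1/(real n+1) \<le> real n + 1" by linarith
  then have "\<exists>h>0. \<forall>x\<in>{1/(real n+1)..real n+1}. \<forall>x'. x \<le> x' \<longrightarrow> x' \<le> x + h \<longrightarrow> Adm x x'"
    using adm[of "1/(real n+1)" "real n+1"] unfolding Adm_def by auto
  then show ?thesis unfolding HH_def by (rule someI_ex) 
qed

definition Hm :: "nat \<Rightarrow> real" where
  "Hm N = Min (HH ` {..N})"

lemma Hm_pos: "Hm N > 0"
  unfolding Hm_def using HH by (subst Min_gr_iff) auto

lemma Hm_le: "n \<le> N \<Longrightarrow> Hm N \<le> HH n"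
  unfolding Hm_def by (rule Min_le) auto

definition nn :: "real \<Rightarrow> nat" where
  "nn t = nat \<lceil>t + 2/t\<rceil>"

definition ww :: "real \<Rightarrow> real" where
  "ww t = min (t/2) (HH (nn t))"

lemma nn_props:
  assumes "t > 0"
  shows "1/(real (nn t)+1) \<le> t/2" "t + 1 \<le> real (nn t) + 1"
proof -
  have n: "real (nn t) \<ge> t + 2/t" unfolding nn_def by linarith
  have tp: "2/t > 0" using assms by simp
  then have N: "real (nn t) + 1 \<ge> 2/t" using n assms by linarith
  have "1/(real (nn t)+1) \<le> 1/(2/t)"
    by (rule divide_left_mono[OF N]) (use tp in auto)
  then show "1/(real (nn t)+1) \<le> t/2" by simp
  show "t + 1 \<le> real (nn t) + 1" using n tp by linarith
qed

lemma ww_pos: "t > 0 \<Longrightarrow> ww t > 0"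
  unfolding ww_def using HH by auto

lemma ww_le: "ww t \<le> t / 2"
  unfolding ww_def by auto

lemma adm_fw: "t > 0 \<Longrightarrow> Adm t (t + ww t)"
proof -
  assume t: "t > 0"
  have "t \<in> {1/(real (nn t)+1)..real (nn t)+1}" using nn_props[OF t] t by auto
  moreover have "t \<le> t + ww t" using ww_pos[OF t] by simp
  moreover have "t + ww t \<le> t + HH (nn t)" unfolding ww_def by simp
  ultimately show ?thesis using HH[of "nn t"] by blast
qed

lemma adm_bw: "t > 0 \<Longrightarrow> Adm (t - ww t) t"
proof -
  assume t: "t > 0"
  have "t - ww t \<ge> t/2" using ww_le[of t] by auto
  then have "t - ww t \<in> {1/(real (nn t)+1)..real (nn t)+1}" using nn_props[OF t] t ww_pos[OF t] by auto
  moreover have "t \<le> t - ww t + HH (nn t)" unfolding ww_def by auto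
  ultimately show ?thesis using HH[of "nn t"] ww_pos[OF t] by auto
qed

lemma ww_lower:
  assumes "\<epsilon> > 0" "\<epsilon> \<le> t" "t \<le> B"
  shows "min (\<epsilon>/2) (Hm (nat \<lceil>B + 2/\<epsilon>\<rceil>)) \<le> ww t"
proof -
  have "2/t \<le> 2/\<epsilon>" by (rule divide_left_mono) (use assms in auto)
  then have "t + 2/t \<le> B + 2/\<epsilon>" using assms by linarith
  then have "nn t \<le> nat \<lceil>B + 2/\<epsilon>\<rceil>" unfolding nn_def by (intro nat_mono ceiling_mono)
  then have "Hm (nat \<lceil>B + 2/\<epsilon>\<rceil>) \<le> HH (nn t)" by (rule Hm_le)
  then show ?thesis unfolding ww_def using assms by auto
qed

primrec fw :: "nat \<Rightarrow> real" where
  "fw 0 = 1"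
| "fw (Suc m) = fw m + ww (fw m)"

primrec bw :: "nat \<Rightarrow> real" where
  "bw 0 = 1"
| "bw (Suc m) = bw m - ww (bw m)"

lemma fw_ge1: "fw m \<ge> 1"
proof (induction m)
  case (Suc m) then show ?case using ww_pos[of "fw m"] by simp
qed simp

lemma fw_step: "fw m < fw (Suc m)"
  using ww_pos[of "fw m"] fw_ge1[of m] by simp

lemma bw_pos: "bw m > 0 \<and> bw m \<le> 1"
proof (induction m)
  case (Suc m) then show ?case using ww_pos[of "bw m"] ww_le[of "bw m"] by simp
qed simp

lemma bw_step: "bw (Suc m) < bw m"
  using ww_pos[of "bw m"] bw_pos[of m] by simp

lemma fw_mono: assumes "m \<le> m'" shows "fw m \<le> fw m'"
proof (rule lift_Suc_mono_le[where f=fw, OF _ assms])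
  fix n show "fw n \<le> fw (Suc n)" using fw_step[of n] by linarith
qed

lemma bw_mono: assumes "m \<le> m'" shows "bw m' \<le> bw m"
proof (rule lift_Suc_antimono_le[where f=bw, OF _ assms])
  fix n show "bw (Suc n) \<le> bw n" using bw_step[of n] by linarith
qed

lemma fw_unbounded: "\<exists>m. fw m > B"
proof (rule ccontr)
  assume "\<not> (\<exists>m. fw m > B)"
  then have b: "fw m \<le> B" for m using not_less by blast
  define c where "c = min (1/2) (Hm (nat \<lceil>B + 2/1\<rceil>))"
  have c: "c > 0" unfolding c_def using Hm_pos by auto
  have cw: "c \<le> ww (fw m)" for m unfolding c_def using ww_lower[of 1 "fw m" B] fw_ge1 b by auto
  have fwc: "fw m \<ge> 1 + real m * c" for m
  proof (induction m)
    case (Suc m) then show ?case using cw[of m] by (simp add: algebra_simps)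
  qed simp
  obtain m where "real m * c > B" using reals_Archimedean3[OF c] by blast
  then show False using b[of m] c fwc[of m] by linarith
qed

lemma bw_small: "\<epsilon> > 0 \<Longrightarrow> \<exists>m. bw m < \<epsilon>"
proof (rule ccontr)
  assume e: "\<epsilon> > 0" and "\<not> (\<exists>m. bw m < \<epsilon>)"
  then have b: "bw m \<ge> \<epsilon>" for m using not_less by blast
  define c where "c = min (\<epsilon>/2) (Hm (nat \<lceil>1 + 2/\<epsilon>\<rceil>))"
  have c: "c > 0" unfolding c_def using Hm_pos e by auto
  have cw: "c \<le> ww (bw m)" for m unfolding c_def using ww_lower[of \<epsilon> "bw m" 1] bw_pos b e by auto
  have bwc: "bw m \<le> 1 - real m * c" for m
  proof (induction m)
    case (Suc m) then show ?case using cw[of m] by (simp add: algebra_simps)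
  qed simp
  obtain m where "real m * c > 1" using reals_Archimedean3[OF c] by blast
  then show False using b[of m] bw_pos[of m] c e bwc[of m] by linarith
qed

definition nu :: "int \<Rightarrow> real" where
  "nu k = (if k \<ge> 0 then fw (nat k) else bw (nat (-k)))"

lemma nu_pos: "nu k > 0"
proof (cases "k \<ge> 0")
  case True then show ?thesis unfolding nu_def using fw_ge1[of "nat k"] by simp
next
  case False then show ?thesis unfolding nu_def using bw_pos[of "nat (-k)"] by simp
qed

lemma nu_succ: "nu (k+1) = (if k \<ge> 0 then nu k + ww (nu k) else nu k + ww (nu (k+1)))"
proof (cases "k \<ge> 0")
  case True
  then have "nat (k+1) = Suc (nat k)" by simp
  then show ?thesis using True unfolding nu_def by simp
next
  case False
  then have "nat (-k) = Suc (nat (-(k+1)))" by simp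
  then have "nu k = nu (k+1) - ww (nu (k+1))" using False unfolding nu_def by auto
  then show ?thesis using False by simp
qed

lemma nu_adm: "Adm (nu k) (nu (k+1))"
proof (cases "k \<ge> 0")
  case True
  then show ?thesis using adm_fw[OF nu_pos[of k]] nu_succ[of k] by simp
next
  case False
  have "nu k = nu (k+1) - ww (nu (k+1))" using nu_succ[of k] False by simp
  then show ?thesis using adm_bw[OF nu_pos[of "k+1"]] by simp
qed

lemma nu_step: "nu k < nu (k+1)"
  using nu_succ[of k] ww_pos[OF nu_pos[of k]] ww_pos[OF nu_pos[of "k+1"]] by (auto split: if_splits)

lemma nu_strict: "k < k' \<Longrightarrow> nu k < nu k'"
proof -
  assume "k < k'"
  define n where "n = nat (k' - k - 1)"
  have n: "k' = k + 1 + int n" unfolding n_def using \<open>k < k'\<close> by simp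
  have "nu k < nu (k + 1 + int n)"
  proof (induction n)
    case 0 then show ?case using nu_step by simp
  next
    case (Suc n)
    have "nu (k + 1 + int n) < nu (k + 1 + int n + 1)" by (rule nu_step)
    then show ?case using Suc by (simp add: add.assoc)
  qed
  then show ?thesis using n by simp
qed

lemma nu_mono: "k \<le> k' \<Longrightarrow> nu k \<le> nu k'"
  using nu_strict by (cases "k = k'") (auto simp: less_imp_le)

lemma nu_big: "\<exists>K. \<forall>k\<ge>K. nu k > B"
proof -
  obtain m where m: "fw m > B" using fw_unbounded by blast
  have "nu k > B" if "k \<ge> int m" for k
  proof -
    have "nu (int m) = fw m" unfolding nu_def by simp
    then show ?thesis using nu_mono[OF that] m by simp
  qed
  then show ?thesis by blast
qed

lemma nu_small: "\<epsilon> > 0 \<Longrightarrow> \<exists>K. \<forall>k\<le>K. nu k < \<epsilon>"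
proof -
  assume e: "\<epsilon> > 0"
  obtain m where m: "bw m < \<epsilon>" using bw_small[OF e] by blast
  have "nu (- int m) \<le> bw m" unfolding nu_def by (cases "m = 0") auto
  then have "nu k < \<epsilon>" if "k \<le> - int m" for k using nu_mono[OF that] m by simp
  then show ?thesis by blast
qed

end

definition PL :: "(int \<Rightarrow> real) \<Rightarrow> real \<Rightarrow> real" where
  "PL y u = (1 - (u - of_int \<lfloor>u\<rfloor>)) * y \<lfloor>u\<rfloor> + (u - of_int \<lfloor>u\<rfloor>) * y (\<lfloor>u\<rfloor> + 1)"

lemma PL_seg:
  assumes "of_int k \<le> u" "u \<le> of_int k + 1"
  shows "PL y u = y k + (u - of_int k) * (y (k+1) - y k)"
proof (cases "u = of_int k + 1")
  case True
  then have "\<lfloor>u\<rfloor> = k + 1" by simp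
  then show ?thesis unfolding PL_def using True by (simp add: algebra_simps)
next
  case False
  then have "u < of_int k + 1" using assms by simp
  then have "\<lfloor>u\<rfloor> = k" using assms by (simp add: floor_eq_iff)
  then show ?thesis unfolding PL_def by (simp add: algebra_simps)
qed

lemma PL_between:
  assumes "of_int k \<le> u" "u \<le> of_int k + 1" "y k \<le> y (k+1)"
  shows "y k \<le> PL y u \<and> PL y u \<le> y (k+1)"
proof -
  have t: "0 \<le> u - of_int k" "u - of_int k \<le> 1" using assms by auto
  have d: "0 \<le> y (k+1) - y k" using assms by simp
  have "0 \<le> (u - of_int k) * (y (k+1) - y k)" using t d by simp
  moreover have "(u - of_int k) * (y (k+1) - y k) \<le> y (k+1) - y k"
    using mult_left_le_one_le[OF d t] by (simp add: mult.commute)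
  ultimately show ?thesis using PL_seg[OF assms(1,2), of y] by linarith
qed

lemma PL_bounds_aux:
  assumes sl: "\<And>k. K1 \<le> k \<Longrightarrow> k < K2 \<Longrightarrow> m \<le> y (k+1) - y k \<and> y (k+1) - y k \<le> M"
  shows "\<And>u. of_int K1 \<le> u \<Longrightarrow> u \<le> u' \<Longrightarrow> u' \<le> of_int K2 \<Longrightarrow> u' \<le> of_int \<lfloor>u\<rfloor> + 1 + real n \<Longrightarrow>
     m * (u' - u) \<le> PL y u' - PL y u \<and> PL y u' - PL y u \<le> M * (u' - u)"
proof (induction n)
  have base: "m * (u' - u) \<le> PL y u' - PL y u \<and> PL y u' - PL y u \<le> M * (u' - u)"
    if a: "of_int K1 \<le> u" "u \<le> u'" "u' \<le> of_int K2" "u' \<le> of_int \<lfloor>u\<rfloor> + 1" for u u'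
  proof (cases "u = u'")
    case True then show ?thesis by simp
  next
    case False
    define k where "k = \<lfloor>u\<rfloor>"
    have k1: "of_int k \<le> u" "u \<le> of_int k + 1" unfolding k_def by linarith+
    have k2: "of_int k \<le> u'" "u' \<le> of_int k + 1" using a k1 unfolding k_def by linarith+
    have "K1 \<le> k" unfolding k_def using a(1) by (simp add: le_floor_iff)
    moreover have "k < K2"
    proof -
      have "of_int k < (of_int K2::real)" using k1 a False by linarith
      then show ?thesis by simp
    qed
    ultimately have s: "m \<le> y (k+1) - y k" "y (k+1) - y k \<le> M" using sl by auto
    have eq: "PL y u' - PL y u = (u' - u) * (y (k+1) - y k)"
      using PL_seg[OF k1, of y] PL_seg[OF k2, of y] by (simp add: algebra_simps)
    have d: "u' - u \<ge> 0" using a by simp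
    show ?thesis unfolding eq using mult_left_mono[OF s(1) d] mult_left_mono[OF s(2) d]
      by (simp add: mult.commute)
  qed
  {
    case 0
    then show ?case using base[of u u'] by simp
  next
    case (Suc n)
    show ?case
    proof (cases "u' \<le> of_int \<lfloor>u\<rfloor> + 1")
      case True then show ?thesis using base[of u u'] Suc.prems by simp
    next
      case False
      define v where "v = of_int \<lfloor>u\<rfloor> + (1::real)"
      have fv: "\<lfloor>v\<rfloor> = \<lfloor>u\<rfloor> + 1" unfolding v_def by simp
      have uv: "u \<le> v" unfolding v_def by linarith
      have vu': "v \<le> u'" using False unfolding v_def by simp
      have "of_int K1 \<le> v" using Suc.prems uv by simp
      moreover have "u' \<le> of_int \<lfloor>v\<rfloor> + 1 + real n" using Suc.prems(4) fv by simp
      ultimately have ih: "m * (u' - v) \<le> PL y u' - PL y v \<and> PL y u' - PL y v \<le> M * (u' - v)"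
        using Suc.IH vu' Suc.prems(3) by blast
      have b: "m * (v - u) \<le> PL y v - PL y u \<and> PL y v - PL y u \<le> M * (v - u)"
        using base[of u v] Suc.prems uv vu' unfolding v_def by auto
      show ?thesis using ih b by (simp add: algebra_simps)
    qed
  }
qed

lemma PL_bounds:
  assumes sl: "\<And>k. K1 \<le> k \<Longrightarrow> k < K2 \<Longrightarrow> m \<le> y (k+1) - y k \<and> y (k+1) - y k \<le> M"
    and "of_int K1 \<le> u" "u \<le> u'" "u' \<le> of_int K2"
  shows "m * (u' - u) \<le> PL y u' - PL y u \<and> PL y u' - PL y u \<le> M * (u' - u)"
proof -
  define n where "n = nat \<lceil>u' - u\<rceil>"
  have "u' - u \<le> of_int \<lceil>u' - u\<rceil>" by (rule le_of_int_ceiling)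
  moreover have "\<lceil>u' - u\<rceil> \<ge> 0" using assms(3) by simp
  ultimately have "u' - u \<le> real n" unfolding n_def by simp
  moreover have "u \<le> of_int \<lfloor>u\<rfloor> + 1" by linarith
  ultimately have "u' \<le> of_int \<lfloor>u\<rfloor> + 1 + real n" by linarith
  then show ?thesis using PL_bounds_aux[where ?K1.0=K1 and ?K2.0=K2 and m=m and y=y and M=M, OF sl] assms(2-4) by blast
qed

definition locbd :: "(real \<Rightarrow> real) \<Rightarrow> bool" where
  "locbd F \<longleftrightarrow> (\<forall>ra rb. 0 < ra \<longrightarrow> ra \<le> rb \<longrightarrow> (\<exists>m M. 0 < m \<and> m \<le> M \<and>
      (\<forall>r r'. ra \<le> r \<longrightarrow> r \<le> r' \<longrightarrow> r' \<le> rb \<longrightarrow> m * (r' - r) \<le> F r' - F r \<and> F r' - F r \<le> M * (r' - r))))"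

lemma KinfF:
  assumes H0: "F 0 = 0" and Hnn: "\<And>r. r \<ge> 0 \<Longrightarrow> 0 \<le> F r" and Hloc: "locbd F"
    and Hsmall: "\<And>\<epsilon>. \<epsilon> > 0 \<Longrightarrow> \<exists>\<delta>>0. \<forall>r. 0 < r \<longrightarrow> r \<le> \<delta> \<longrightarrow> F r \<le> \<epsilon>"
    and Hbig: "\<And>B. \<exists>r\<ge>0. B < F r"
  shows "class_Kinf F"
proof (rule KinfI)
  show "F 0 = 0" by fact
  show "\<exists>r\<ge>0. M < F r" for M using Hbig by blast
  show strict: "F x < F y" if xy: "0 \<le> x" "x < y" for x y
  proof (cases "x = 0")
    case True
    have y: "0 < y / 2" "y/2 \<le> y" using xy True by auto
    obtain m M where mM: "0 < m" "m \<le> M" "\<forall>r r'. y/2 \<le> r \<longrightarrow> r \<le> r' \<longrightarrow> r' \<le> y \<longrightarrow> m * (r' - r) \<le> F r' - F r \<and> F r' - F r \<le> M * (r' - r)"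
      using Hloc y unfolding locbd_def by blast
    have "m * (y - y/2) \<le> F y - F (y/2)" using mM(3)[rule_format, of "y/2" y] y by linarith
    moreover have "0 < m * (y - y/2)" using mM(1) y by simp
    moreover have "0 \<le> F (y/2)" using Hnn y by auto
    moreover have "F x = 0" using True H0 by simp
    ultimately show ?thesis by linarith
  next
    case False
    then have x: "0 < x" "x \<le> y" using xy by auto
    obtain m M where mM: "0 < m" "m \<le> M" "\<forall>r r'. x \<le> r \<longrightarrow> r \<le> r' \<longrightarrow> r' \<le> y \<longrightarrow> m * (r' - r) \<le> F r' - F r \<and> F r' - F r \<le> M * (r' - r)"
      using Hloc x unfolding locbd_def by blast
    have "m * (y - x) \<le> F y - F x" using mM(3)[rule_format, of x y] x by linarith
    moreover have "0 < m * (y - x)" using mM(1) xy by simp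
    ultimately show ?thesis by linarith
  qed
  show "continuous_on {0..} F"
    unfolding continuous_on_eq_continuous_within
  proof
    fix x :: real assume x: "x \<in> {0..}"
    show "continuous (at x within {0..}) F"
      unfolding continuous_within_eps_delta
    proof (intro allI impI)
      fix e :: real assume e: "e > 0"
      show "\<exists>d>0. \<forall>x'\<in>{0..}. dist x' x < d \<longrightarrow> dist (F x') (F x) < e"
      proof (cases "x = 0")
        case True
        obtain \<delta> where \<delta>: "\<delta> > 0" "\<forall>r. 0 < r \<longrightarrow> r \<le> \<delta> \<longrightarrow> F r \<le> e/2" using Hsmall[of "e/2"] e by auto
        show ?thesis
        proof (intro exI[of _ \<delta>] conjI ballI impI)
          fix x' :: real assume x': "x' \<in> {0..}" "dist x' x < \<delta>"
          show "dist (F x') (F x) < e"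
          proof (cases "x' = 0")
            case True then show ?thesis using \<open>x = 0\<close> e by simp
          next
            case False
            then have "F x' \<le> e/2" using \<delta>(2) x' \<open>x = 0\<close> by (auto simp: dist_real_def)
            moreover have "0 \<le> F x'" using Hnn x' by auto
            ultimately show ?thesis using \<open>x = 0\<close> H0 e by (simp add: dist_real_def)
          qed
        qed (use \<delta> in auto)
      next
        case False
        then have x0: "x > 0" using x by auto
        have "0 < x/2" "x/2 \<le> 2 * x" using x0 by auto
        then obtain m M where mM: "0 < m" "m \<le> M" "\<forall>r r'. x/2 \<le> r \<longrightarrow> r \<le> r' \<longrightarrow> r' \<le> 2 * x \<longrightarrow> m * (r' - r) \<le> F r' - F r \<and> F r' - F r \<le> M * (r' - r)"
          using Hloc unfolding locbd_def by blast
        define d where "d = min (x/2) (e / (M + 1))"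
        have d: "d > 0" unfolding d_def using x0 e mM by auto
        show ?thesis
        proof (intro exI[of _ d] conjI d ballI impI)
          fix x' :: real assume x': "x' \<in> {0..}" "dist x' x < d"
          have hd: "\<bar>x' - x\<bar> < d" using x' by (simp add: dist_real_def)
          have "d \<le> x/2" unfolding d_def by (rule min.cobounded1)
          then have r: "x/2 \<le> x'" "x' \<le> 2 * x" using hd x0 by linarith+
          have "\<bar>F x' - F x\<bar> \<le> M * \<bar>x' - x\<bar>"
          proof (cases "x \<le> x'")
            case True
            have "0 \<le> m * (x' - x)" using mM(1) True by simp
            then show ?thesis using mM(3)[rule_format, of x x'] r x0 True by (simp add: abs_if)
          next
            case False
            have "0 \<le> m * (x - x')" using mM(1) False by simp
            then show ?thesis using mM(3)[rule_format, of x' x] r x0 False by (simp add: abs_if algebra_simps)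
          qed
          also have "\<dots> \<le> M * d" using hd mM by (intro mult_left_mono) auto
          also have "\<dots> \<le> M * (e / (M+1))" unfolding d_def using mM by (intro mult_left_mono) auto
          also have "\<dots> < e" using mM e by (simp add: field_simps)
          finally show "dist (F x') (F x) < e" by (simp add: dist_real_def)
        qed
      qed
    qed
  qed
qed


lemma inv_props:
  assumes K: "class_Kinf F" and v: "0 \<le> v" "v \<le> F rb" "0 \<le> rb"
  shows "F (the_inv_into {0..} F v) = v" "the_inv_into {0..} F v \<ge> 0"
proof -
  have inj: "inj_on F {0..}"
    using K unfolding class_Kinf_def class_K_def by (auto intro: strict_mono_on_imp_inj_on)
  have "continuous_on {0..rb} F"
    using K_cont[OF Kinf_K[OF K]] by (rule continuous_on_subset) auto
  then obtain x where x: "x \<ge> 0" "x \<le> rb" "F x = v"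
    using IVT'[of F 0 v rb] v K_zero[OF Kinf_K[OF K]] by auto
  then have vi: "v \<in> F ` {0..}" by auto
  show "F (the_inv_into {0..} F v) = v" by (rule f_the_inv_into_f[OF inj vi])
  show "the_inv_into {0..} F v \<ge> 0" using the_inv_into_into[OF inj vi, of "{0..}"] by simp
qed

lemma InvLip:
  fixes G :: "real \<Rightarrow> 'i \<Rightarrow> real"
  assumes Kinf: "\<And>i. class_Kinf (\<lambda>r. G r i)"
    and Hloc: "\<And>ra rb. 0 < ra \<Longrightarrow> ra \<le> rb \<Longrightarrow> \<exists>m M. 0 < m \<and> m \<le> M \<and>
        (\<forall>i r r'. ra \<le> r \<longrightarrow> r \<le> r' \<longrightarrow> r' \<le> rb \<longrightarrow> m * (r' - r) \<le> G r' i - G r i \<and> G r' i - G r i \<le> M * (r' - r))"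
    and Hsmall: "\<And>\<epsilon>. \<epsilon> > 0 \<Longrightarrow> \<exists>\<delta>>0. \<forall>i r. 0 < r \<longrightarrow> r \<le> \<delta> \<longrightarrow> G r i \<le> \<epsilon>"
    and Hbig: "\<And>B. \<exists>r\<ge>0. \<forall>i. B < G r i"
  shows "\<forall>a b. 0 < a \<longrightarrow> a \<le> b \<longrightarrow> (\<exists>l L. 0 < l \<and> l \<le> L \<and>
        (\<forall>r1\<in>{a..b}. \<forall>r2\<in>{a..b}. \<forall>i.
           l * \<bar>r1 - r2\<bar> \<le> \<bar>the_inv_into {0..} (\<lambda>r. G r i) r1 - the_inv_into {0..} (\<lambda>r. G r i) r2\<bar> \<and>
           \<bar>the_inv_into {0..} (\<lambda>r. G r i) r1 - the_inv_into {0..} (\<lambda>r. G r i) r2\<bar> \<le> L * \<bar>r1 - r2\<bar>))"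
proof (intro allI impI)
  fix a b :: real assume ab: "0 < a" "a \<le> b"
  obtain \<delta> where \<delta>: "\<delta> > 0" "\<forall>i r. 0 < r \<longrightarrow> r \<le> \<delta> \<longrightarrow> G r i \<le> a/2"
    using Hsmall[of "a/2"] ab by auto
  obtain rb where rb: "rb \<ge> 0" "\<forall>i. b < G rb i" using Hbig by blast
  have Gz: "G 0 i = 0" for i using K_zero[OF Kinf_K[OF Kinf[of i]]] by simp
  have "\<delta> < rb"
  proof (rule ccontr)
    assume "\<not> \<delta> < rb"
    then have "rb \<le> \<delta>" by simp
    moreover have "rb \<noteq> 0"
    proof
      assume "rb = 0"
      then have "b < 0" using rb(2)[rule_format, of undefined] Gz[of undefined] by simp
      then show False using ab by linarith
    qed
    ultimately have "G rb undefined \<le> a/2" using \<delta>(2) rb(1) by auto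
    then show False using rb(2)[rule_format, of undefined] ab by linarith
  qed
  then obtain m M where mM: "0 < m" "m \<le> M" "\<forall>i r r'. \<delta> \<le> r \<longrightarrow> r \<le> r' \<longrightarrow> r' \<le> rb \<longrightarrow>
       m * (r' - r) \<le> G r' i - G r i \<and> G r' i - G r i \<le> M * (r' - r)"
    using Hloc[of \<delta> rb] \<delta>(1) by auto
  define inv where "inv i v = the_inv_into {0..} (\<lambda>r. G r i) v" for i v
  have invp: "G (inv i v) i = v \<and> \<delta> \<le> inv i v \<and> inv i v \<le> rb" if v: "v \<in> {a..b}" for i v
  proof -
    have v0: "0 \<le> v" "v \<le> G rb i" using v ab rb(2)[rule_format, of i] by auto
    have e: "G (inv i v) i = v" "inv i v \<ge> 0"
      using inv_props[of "\<lambda>r. G r i", OF Kinf v0 rb(1)] unfolding inv_def by auto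
    have "\<delta> \<le> inv i v"
    proof (rule ccontr)
      assume "\<not> \<delta> \<le> inv i v"
      moreover have "inv i v \<noteq> 0" using e(1) Gz[of i] v ab by auto
      ultimately have "G (inv i v) i \<le> a/2" using \<delta>(2) e(2) by auto
      then show False using e(1) v ab by auto
    qed
    moreover have "inv i v \<le> rb"
    proof (rule ccontr)
      assume "\<not> inv i v \<le> rb"
      then have "G rb i < G (inv i v) i" using K_strict[OF Kinf_K[OF Kinf[of i]] rb(1)] by auto
      then show False using e(1) v rb(2)[rule_format, of i] by auto
    qed
    ultimately show ?thesis using e by auto
  qed
  have A: "0 < 1/M" using mM by simp
  have B: "1/M \<le> 1/m" using mM by (simp add: frac_le)
  have C: "\<forall>r1\<in>{a..b}. \<forall>r2\<in>{a..b}. \<forall>i.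
           1/M * \<bar>r1 - r2\<bar> \<le> \<bar>the_inv_into {0..} (\<lambda>r. G r i) r1 - the_inv_into {0..} (\<lambda>r. G r i) r2\<bar> \<and>
           \<bar>the_inv_into {0..} (\<lambda>r. G r i) r1 - the_inv_into {0..} (\<lambda>r. G r i) r2\<bar> \<le> 1/m * \<bar>r1 - r2\<bar>"
  proof (intro ballI allI conjI)
    fix r1 r2 i assume r: "r1 \<in> {a..b}" "r2 \<in> {a..b}"
    have two: "m * \<bar>inv i r1 - inv i r2\<bar> \<le> \<bar>r1 - r2\<bar> \<and> \<bar>r1 - r2\<bar> \<le> M * \<bar>inv i r1 - inv i r2\<bar>"
    proof (cases "inv i r1 \<le> inv i r2")
      case True
      have "m * (inv i r2 - inv i r1) \<le> r2 - r1 \<and> r2 - r1 \<le> M * (inv i r2 - inv i r1)"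
        using mM(3)[rule_format, of "inv i r1" "inv i r2" i] invp[OF r(1), of i] invp[OF r(2), of i] True by auto
      moreover have "0 \<le> m * (inv i r2 - inv i r1)" using mM(1) True by simp
      ultimately have h: "m * (inv i r2 - inv i r1) \<le> r2 - r1" "r2 - r1 \<le> M * (inv i r2 - inv i r1)" "r1 - r2 \<le> 0"
        by linarith+
      have "\<bar>r1 - r2\<bar> = r2 - r1" using h(3) by simp
      moreover have "\<bar>inv i r1 - inv i r2\<bar> = inv i r2 - inv i r1" using True by simp
      ultimately show ?thesis using h by simp
    next
      case False
      have "m * (inv i r1 - inv i r2) \<le> r1 - r2 \<and> r1 - r2 \<le> M * (inv i r1 - inv i r2)"
        using mM(3)[rule_format, of "inv i r2" "inv i r1" i] invp[OF r(1), of i] invp[OF r(2), of i] False by auto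
      moreover have "0 \<le> m * (inv i r1 - inv i r2)" using mM(1) False by simp
      ultimately have h: "m * (inv i r1 - inv i r2) \<le> r1 - r2" "r1 - r2 \<le> M * (inv i r1 - inv i r2)" "r2 - r1 \<le> 0"
        by linarith+
      have "\<bar>r1 - r2\<bar> = r1 - r2" using h(3) by simp
      moreover have "\<bar>inv i r1 - inv i r2\<bar> = inv i r1 - inv i r2" using False by simp
      ultimately show ?thesis using h by simp
    qed
    show "1/M * \<bar>r1 - r2\<bar> \<le> \<bar>the_inv_into {0..} (\<lambda>r. G r i) r1 - the_inv_into {0..} (\<lambda>r. G r i) r2\<bar>"
      using two mM unfolding inv_def by (simp add: field_simps)
    show "\<bar>the_inv_into {0..} (\<lambda>r. G r i) r1 - the_inv_into {0..} (\<lambda>r. G r i) r2\<bar> \<le> 1/m * \<bar>r1 - r2\<bar>"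
      using two mM unfolding inv_def by (simp add: field_simps)
  qed
  show "\<exists>l L. 0 < l \<and> l \<le> L \<and>
        (\<forall>r1\<in>{a..b}. \<forall>r2\<in>{a..b}. \<forall>i.
           l * \<bar>r1 - r2\<bar> \<le> \<bar>the_inv_into {0..} (\<lambda>r. G r i) r1 - the_inv_into {0..} (\<lambda>r. G r i) r2\<bar> \<and>
           \<bar>the_inv_into {0..} (\<lambda>r. G r i) r1 - the_inv_into {0..} (\<lambda>r. G r i) r2\<bar> \<le> L * \<bar>r1 - r2\<bar>)"
    by (intro exI[of _ "1/M"] exI[of _ "1/m"] conjI A B C)
qed


lemma locbd_Inf:
  fixes G :: "real \<Rightarrow> 'i \<Rightarrow> real"
  assumes Hloc: "\<And>ra rb. 0 < ra \<Longrightarrow> ra \<le> rb \<Longrightarrow> \<exists>m M. 0 < m \<and> m \<le> M \<and>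
        (\<forall>i r r'. ra \<le> r \<longrightarrow> r \<le> r' \<longrightarrow> r' \<le> rb \<longrightarrow> m * (r' - r) \<le> G r' i - G r i \<and> G r' i - G r i \<le> M * (r' - r))"
    and nn: "\<And>r i. r \<ge> 0 \<Longrightarrow> 0 \<le> G r i"
  shows "locbd (\<lambda>r. Inf (range (G r)))"
  unfolding locbd_def
proof (intro allI impI)
  fix ra rb :: real assume r: "0 < ra" "ra \<le> rb"
  obtain m M where mM: "0 < m" "m \<le> M" "\<forall>i r r'. ra \<le> r \<longrightarrow> r \<le> r' \<longrightarrow> r' \<le> rb \<longrightarrow>
       m * (r' - r) \<le> G r' i - G r i \<and> G r' i - G r i \<le> M * (r' - r)"
    using Hloc[OF r] by blast
  have bb: "bdd_below (range (G r))" if "r \<ge> 0" for r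
    unfolding bdd_below_def using nn[OF that] by auto
  have main: "\<forall>r r'. ra \<le> r \<longrightarrow> r \<le> r' \<longrightarrow> r' \<le> rb \<longrightarrow>
     m * (r' - r) \<le> Inf (range (G r')) - Inf (range (G r)) \<and> Inf (range (G r')) - Inf (range (G r)) \<le> M * (r' - r)"
  proof (intro allI impI)
    fix x y assume xy: "ra \<le> x" "x \<le> y" "y \<le> rb"
    have x0: "x \<ge> 0" "y \<ge> 0" using xy r by auto
    have "Inf (range (G x)) + m * (y - x) \<le> Inf (range (G y))"
    proof (rule cINF_greatest)
      fix i
      have "Inf (range (G x)) \<le> G x i" by (rule cINF_lower[OF bb[OF x0(1)]]) simp
      then show "Inf (range (G x)) + m * (y - x) \<le> G y i" using mM(3)[rule_format, of x y i] xy by linarith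
    qed simp
    moreover have "Inf (range (G y)) - M * (y - x) \<le> Inf (range (G x))"
    proof (rule cINF_greatest)
      fix i
      have "Inf (range (G y)) \<le> G y i" by (rule cINF_lower[OF bb[OF x0(2)]]) simp
      then show "Inf (range (G y)) - M * (y - x) \<le> G x i" using mM(3)[rule_format, of x y i] xy by linarith
    qed simp
    ultimately show "m * (y - x) \<le> Inf (range (G y)) - Inf (range (G x)) \<and>
      Inf (range (G y)) - Inf (range (G x)) \<le> M * (y - x)" by linarith
  qed
  show "\<exists>m M. 0 < m \<and> m \<le> M \<and> (\<forall>r r'. ra \<le> r \<longrightarrow> r \<le> r' \<longrightarrow> r' \<le> rb \<longrightarrow>
     m * (r' - r) \<le> Inf (range (G r')) - Inf (range (G r)) \<and> Inf (range (G r')) - Inf (range (G r)) \<le> M * (r' - r))"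
    by (intro exI[of _ m] exI[of _ M] conjI mM(1,2) main)
qed

lemma locbd_Sup:
  fixes G :: "real \<Rightarrow> 'i \<Rightarrow> real"
  assumes Hloc: "\<And>ra rb. 0 < ra \<Longrightarrow> ra \<le> rb \<Longrightarrow> \<exists>m M. 0 < m \<and> m \<le> M \<and>
        (\<forall>i r r'. ra \<le> r \<longrightarrow> r \<le> r' \<longrightarrow> r' \<le> rb \<longrightarrow> m * (r' - r) \<le> G r' i - G r i \<and> G r' i - G r i \<le> M * (r' - r))"
    and bb: "\<And>r. r \<ge> 0 \<Longrightarrow> bdd_above (range (G r))"
  shows "locbd (\<lambda>r. Sup (range (G r)))"
  unfolding locbd_def
proof (intro allI impI)
  fix ra rb :: real assume r: "0 < ra" "ra \<le> rb"
  obtain m M where mM: "0 < m" "m \<le> M" "\<forall>i r r'. ra \<le> r \<longrightarrow> r \<le> r' \<longrightarrow> r' \<le> rb \<longrightarrow>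
       m * (r' - r) \<le> G r' i - G r i \<and> G r' i - G r i \<le> M * (r' - r)"
    using Hloc[OF r] by blast
  have main: "\<forall>r r'. ra \<le> r \<longrightarrow> r \<le> r' \<longrightarrow> r' \<le> rb \<longrightarrow>
     m * (r' - r) \<le> Sup (range (G r')) - Sup (range (G r)) \<and> Sup (range (G r')) - Sup (range (G r)) \<le> M * (r' - r)"
  proof (intro allI impI)
    fix x y assume xy: "ra \<le> x" "x \<le> y" "y \<le> rb"
    have x0: "x \<ge> 0" "y \<ge> 0" using xy r by auto
    have "Sup (range (G x)) \<le> Sup (range (G y)) - m * (y - x)"
    proof (rule cSUP_least)
      fix i
      have "G y i \<le> Sup (range (G y))" by (rule cSUP_upper[OF _ bb[OF x0(2)]]) simp
      then show "G x i \<le> Sup (range (G y)) - m * (y - x)" using mM(3)[rule_format, of x y i] xy by linarith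
    qed simp
    moreover have "Sup (range (G y)) \<le> Sup (range (G x)) + M * (y - x)"
    proof (rule cSUP_least)
      fix i
      have "G x i \<le> Sup (range (G x))" by (rule cSUP_upper[OF _ bb[OF x0(1)]]) simp
      then show "G y i \<le> Sup (range (G x)) + M * (y - x)" using mM(3)[rule_format, of x y i] xy by linarith
    qed simp
    ultimately show "m * (y - x) \<le> Sup (range (G y)) - Sup (range (G x)) \<and>
      Sup (range (G y)) - Sup (range (G x)) \<le> M * (y - x)" by linarith
  qed
  show "\<exists>m M. 0 < m \<and> m \<le> M \<and> (\<forall>r r'. ra \<le> r \<longrightarrow> r \<le> r' \<longrightarrow> r' \<le> rb \<longrightarrow>
     m * (r' - r) \<le> Sup (range (G r')) - Sup (range (G r)) \<and> Sup (range (G r')) - Sup (range (G r)) \<le> M * (r' - r))"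
    by (intro exI[of _ m] exI[of _ M] conjI mM(1,2) main)
qed

context psd_setting begin

definition AA :: "int \<Rightarrow> 'i \<Rightarrow> real" where "AA k = aa (nu k)"
definition gg :: "real \<Rightarrow> real" where "gg r = r - 1/r"
definition sigp :: "real \<Rightarrow> 'i \<Rightarrow> real" where
  "sigp r i = (if r \<le> 0 then 0 else PL (\<lambda>k. AA k i) (gg r))"

lemma nu_nn: "0 \<le> nu k" using nu_pos[of k] by simp

lemma AA_nonneg: "0 \<le> AA k i"
  unfolding AA_def by (rule aa_nonneg[OF nu_nn])

lemma AA_le: "AA k i \<le> \<sigma> (nu k) i"
  unfolding AA_def by (rule aa_hi[OF nu_nn])

lemma AA_lo: "\<sigma> (nu k) i - cc (nu k) \<le> AA k i"
  unfolding AA_def by (rule aa_lo[OF nu_nn])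

lemma AA_hi: "AA k i \<le> \<phi>max (nu k)"
  unfolding AA_def by (rule aa_le_phimax[OF nu_nn])

lemma AA_ge: "7/8 * \<phi>min (nu k) \<le> AA k i"
  unfolding AA_def by (rule aa_ge_phimin[OF nu_nn])

lemma AA_step: "dd (nu (k+1)) - dd (nu k) \<le> AA (k+1) i - AA k i"
  unfolding AA_def by (rule aa_incr[OF nu_nn]) (use nu_step[of k] in simp)

lemma AA_step_pos: "0 < dd (nu (k+1)) - dd (nu k)"
  using dd_strict[OF nu_nn nu_step[of k]] by simp

lemma AA_mono: "AA k i \<le> AA (k+1) i"
  using AA_step[of k i] AA_step_pos[of k] by linarith

lemma sigp_between:
  assumes "r > 0"
  shows "AA \<lfloor>gg r\<rfloor> i \<le> sigp r i \<and> sigp r i \<le> AA (\<lfloor>gg r\<rfloor>+1) i"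
  using PL_between[of "\<lfloor>gg r\<rfloor>" "gg r" "\<lambda>k. AA k i"] AA_mono assms
  unfolding sigp_def by auto

lemma sigp_nonpos: "r \<le> 0 \<Longrightarrow> sigp r = (\<lambda>_. 0)"
  unfolding sigp_def by auto

lemma sigp_nonneg: "0 \<le> sigp r i"
  using sigp_between[of r i] AA_nonneg[of "\<lfloor>gg r\<rfloor>" i] unfolding sigp_def
  by (cases "r \<le> 0") auto

lemma sigp_hi: "r > 0 \<Longrightarrow> sigp r i \<le> \<phi>max (nu (\<lfloor>gg r\<rfloor>+1))"
  using sigp_between[of r i] AA_hi[of "\<lfloor>gg r\<rfloor>+1" i] by auto

lemma sigp_bdd: "\<exists>B. \<forall>i. sigp r i \<le> B"
proof (cases "r \<le> 0")
  case True then show ?thesis by (intro exI[of _ 0]) (simp add: sigp_nonpos)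
next
  case False then show ?thesis using sigp_hi[of r] by (intro exI[of _ "\<phi>max (nu (\<lfloor>gg r\<rfloor>+1))"]) auto
qed

lemma sigp_linf: "sigp r \<in> linf_pos"
proof -
  obtain B where "\<forall>i. sigp r i \<le> B" using sigp_bdd[of r] by blast
  then show ?thesis by (intro linf_posI[OF sigp_nonneg]) auto
qed

lemma sigp_decay: "GR (sigp r) i \<le> sigp r i"
proof (cases "r \<le> 0")
  case True then show ?thesis using sigp_nonpos[OF True] GR_zero by simp
next
  case False
  define k where "k = \<lfloor>gg r\<rfloor>"
  have r: "r > 0" using False by simp
  have "GR (sigp r) i \<le> GR (AA (k+1)) i"
    by (rule GR_mono) (use sigp_nonneg sigp_between[OF r] in \<open>auto simp: k_def\<close>)
  also have "\<dots> \<le> GR (\<sigma> (nu (k+1))) i"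
    by (rule GR_mono) (use AA_nonneg AA_le in auto)
  also have "\<dots> \<le> \<sigma> (nu k) i - cc (nu k)"
    using nu_adm[of k] unfolding Adm_def by auto
  also have "\<dots> \<le> AA k i" by (rule AA_lo)
  also have "\<dots> \<le> sigp r i" using sigp_between[OF r] unfolding k_def by auto
  finally show ?thesis .
qed


lemma gg_mono: assumes "0 < r" "r \<le> r'" shows "gg r \<le> gg r'"
proof -
  have "1/r' \<le> 1/r" by (rule divide_left_mono) (use assms in auto)
  then show ?thesis unfolding gg_def using assms by linarith
qed

lemma gg_diff:
  assumes "0 < ra" "ra \<le> r" "r \<le> r'"
  shows "r' - r \<le> gg r' - gg r \<and> gg r' - gg r \<le> (1 + 1/ra^2) * (r' - r)"
proof -
  have r0: "r > 0" "r' > 0" using assms by auto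
  have eq: "gg r' - gg r = (r' - r) + (r' - r) / (r * r')"
    unfolding gg_def using r0 by (simp add: field_simps)
  have d: "r' - r \<ge> 0" using assms by simp
  have "ra^2 \<le> r * r'" using assms by (simp add: power2_eq_square mult_mono)
  then have "(r' - r) / (r * r') \<le> (r' - r) / ra^2"
    by (intro divide_left_mono d) (use assms r0 in auto)
  moreover have "0 \<le> (r' - r) / (r * r')" using d r0 by simp
  ultimately show ?thesis unfolding eq by (simp add: algebra_simps)
qed

lemma sigp_loc:
  assumes "0 < ra" "ra \<le> rb"
  shows "\<exists>m M. 0 < m \<and> m \<le> M \<and>
        (\<forall>i r r'. ra \<le> r \<longrightarrow> r \<le> r' \<longrightarrow> r' \<le> rb \<longrightarrow> m * (r' - r) \<le> sigp r' i - sigp r i \<and> sigp r' i - sigp r i \<le> M * (r' - r))"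
proof -
  define K1 where "K1 = \<lfloor>gg ra\<rfloor>"
  define K2 where "K2 = \<lceil>gg rb\<rceil> + 1"
  have c1: "of_int K1 \<le> gg ra" unfolding K1_def by (rule of_int_floor_le)
  have c2: "gg rb \<le> of_int \<lceil>gg rb\<rceil>" by (rule le_of_int_ceiling)
  have c3: "of_int K2 = of_int \<lceil>gg rb\<rceil> + (1::real)" unfolding K2_def by simp
  have "(of_int K1::real) < of_int K2" using c1 c2 c3 gg_mono[OF assms] by linarith
  then have K12: "K1 < K2" by simp
  define mK where "mK = Min ((\<lambda>k. dd (nu (k+1)) - dd (nu k)) ` {K1..<K2})"
  define MK where "MK = \<phi>max (nu K2)"
  have fin: "finite ((\<lambda>k. dd (nu (k+1)) - dd (nu k)) ` {K1..<K2})" by simp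
  have ne: "(\<lambda>k. dd (nu (k+1)) - dd (nu k)) ` {K1..<K2} \<noteq> {}" using K12 by simp
  have mK: "mK > 0" unfolding mK_def using AA_step_pos by (subst Min_gr_iff[OF fin ne]) auto
  have mKle: "mK \<le> dd (nu (k+1)) - dd (nu k)" if "K1 \<le> k" "k < K2" for k
    unfolding mK_def by (rule Min_le[OF fin]) (use that in auto)
  have sl: "mK \<le> AA (k+1) i - AA k i \<and> AA (k+1) i - AA k i \<le> MK" if "K1 \<le> k" "k < K2" for k i
  proof
    show "mK \<le> AA (k+1) i - AA k i" using mKle[OF that] AA_step[of k i] by linarith
    have "\<phi>max (nu (k+1)) \<le> MK" unfolding MK_def
      using K_mono[OF Kinf_K[OF phiK(2)] nu_nn nu_mono[of "k+1" K2]] that by auto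
    then show "AA (k+1) i - AA k i \<le> MK" using AA_hi[of "k+1" i] AA_nonneg[of k i] by linarith
  qed
  have mKMK: "mK \<le> MK" using sl[of K1 undefined] K12 by auto
  define M' where "M' = MK * (1 + 1/ra^2)"
  have MK0: "MK \<ge> 0" using mK mKMK by simp
  have mM': "mK \<le> M'"
  proof -
    have "0 \<le> MK * (1/ra^2)" using MK0 by simp
    moreover have "MK * (1 + 1/ra^2) = MK + MK * (1/ra^2)" by (simp add: distrib_left)
    ultimately show "mK \<le> M'" unfolding M'_def using mKMK by linarith
  qed
  have main: "\<forall>i r r'. ra \<le> r \<longrightarrow> r \<le> r' \<longrightarrow> r' \<le> rb \<longrightarrow> mK * (r' - r) \<le> sigp r' i - sigp r i \<and> sigp r' i - sigp r i \<le> M' * (r' - r)"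
  proof (intro allI impI)
    fix i r r' assume rr: "ra \<le> r" "r \<le> r'" "r' \<le> rb"
    have r0: "r > 0" "r' > 0" using rr assms by auto
    have gd: "r' - r \<le> gg r' - gg r \<and> gg r' - gg r \<le> (1 + 1/ra^2) * (r' - r)"
      using gg_diff[OF assms(1) rr(1,2)] .
    have u1: "of_int K1 \<le> gg r" unfolding K1_def using gg_mono[OF assms(1) rr(1)] by linarith
    have u2: "gg r' \<le> of_int K2" using gg_mono[OF r0(2) rr(3)] c2 c3 by linarith
    have "mK * (gg r' - gg r) \<le> PL (\<lambda>k. AA k i) (gg r') - PL (\<lambda>k. AA k i) (gg r) \<and>
          PL (\<lambda>k. AA k i) (gg r') - PL (\<lambda>k. AA k i) (gg r) \<le> MK * (gg r' - gg r)"
      by (rule PL_bounds[of K1 K2 mK "\<lambda>k. AA k i" MK]) (use sl u1 u2 gg_mono[OF r0(1) rr(2)] in auto)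
    moreover have "sigp r' i - sigp r i = PL (\<lambda>k. AA k i) (gg r') - PL (\<lambda>k. AA k i) (gg r)"
      unfolding sigp_def using r0 by simp
    moreover have "mK * (r' - r) \<le> mK * (gg r' - gg r)" using gd mK by (intro mult_left_mono) auto
    moreover have "MK * (gg r' - gg r) \<le> MK * ((1 + 1/ra^2) * (r' - r))" using gd MK0 by (intro mult_left_mono) auto
    ultimately show "mK * (r' - r) \<le> sigp r' i - sigp r i \<and> sigp r' i - sigp r i \<le> M' * (r' - r)"
      unfolding M'_def by (auto simp: algebra_simps)
  qed
  show ?thesis by (intro exI[of _ mK] exI[of _ M'] conjI mK mM' main)
qed


lemma sigp_small:
  assumes "\<epsilon> > 0"
  shows "\<exists>\<delta>>0. \<forall>i r. 0 < r \<longrightarrow> r \<le> \<delta> \<longrightarrow> sigp r i \<le> \<epsilon>"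
proof -
  obtain \<delta>1 where \<delta>1: "\<delta>1 > 0" "\<forall>x. 0 \<le> x \<longrightarrow> x \<le> \<delta>1 \<longrightarrow> \<phi>max x < \<epsilon>"
    using K_small[OF Kinf_K[OF phiK(2)] assms] by blast
  obtain K where K: "\<forall>k\<le>K. nu k < \<delta>1" using nu_small[OF \<delta>1(1)] by blast
  define K' where "K' = min K 0"
  define \<delta> :: real where "\<delta> = 1 / (2 - of_int K')"
  have K'0: "of_int K' \<le> (0::real)" unfolding K'_def by simp
  have \<delta>0: "\<delta> > 0" unfolding \<delta>_def using K'0 by simp
  have \<delta>1': "\<delta> \<le> 1" unfolding \<delta>_def using K'0 by (simp add: field_simps)
  show ?thesis
  proof (intro exI[of _ \<delta>] conjI \<delta>0 allI impI)
    fix i r assume r: "0 < r" "r \<le> \<delta>"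
    have "1/\<delta> \<le> 1/r" by (rule divide_left_mono) (use r in auto)
    then have "2 - of_int K' \<le> 1/r" unfolding \<delta>_def by simp
    moreover have "r \<le> 1" using r \<delta>1' by simp
    ultimately have "gg r \<le> of_int K' - 1" unfolding gg_def by linarith
    then have "\<lfloor>gg r\<rfloor> + 1 \<le> K'" by linarith
    then have "\<lfloor>gg r\<rfloor> + 1 \<le> K" unfolding K'_def by simp
    then have "nu (\<lfloor>gg r\<rfloor> + 1) < \<delta>1" using K by blast
    then have "\<phi>max (nu (\<lfloor>gg r\<rfloor> + 1)) < \<epsilon>" using \<delta>1(2) nu_nn by auto
    then show "sigp r i \<le> \<epsilon>" using sigp_hi[OF r(1), of i] by linarith
  qed
qed

lemma sigp_big: "\<exists>r\<ge>0. \<forall>i. B < sigp r i"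
proof -
  obtain x0 where x0: "x0 \<ge> 0" "\<forall>x\<ge>x0. 8/7 * \<bar>B\<bar> < \<phi>min x" using Kinf_big[OF phiK(1)] by blast
  obtain K where K: "\<forall>k\<ge>K. nu k > x0" using nu_big by blast
  define r :: real where "r = \<bar>of_int K\<bar> + 2"
  have r: "r \<ge> 2" unfolding r_def by simp
  have "1/r \<le> 1" using r by simp
  then have "gg r \<ge> of_int K" unfolding gg_def r_def by linarith
  then have "\<lfloor>gg r\<rfloor> \<ge> K" by linarith
  then have "nu \<lfloor>gg r\<rfloor> > x0" using K by blast
  then have "8/7 * \<bar>B\<bar> < \<phi>min (nu \<lfloor>gg r\<rfloor>)" using x0 by auto
  then have "B < 7/8 * \<phi>min (nu \<lfloor>gg r\<rfloor>)" by linarith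
  then have "\<forall>i. B < sigp r i"
  proof (intro allI)
    fix i assume h: "B < 7/8 * \<phi>min (nu \<lfloor>gg r\<rfloor>)"
    have "AA \<lfloor>gg r\<rfloor> i \<le> sigp r i" using sigp_between[of r i] r by auto
    then show "B < sigp r i" using AA_ge[of "\<lfloor>gg r\<rfloor>" i] h by linarith
  qed
  then show ?thesis using r by (intro exI[of _ r]) auto
qed

lemma sigp_zero: "sigp 0 = (\<lambda>_. 0)" by (rule sigp_nonpos) simp

lemma sigp_Kinf: "class_Kinf (\<lambda>r. sigp r i)"
proof (rule KinfF)
  show "sigp 0 i = 0" using sigp_zero by simp
  show "0 \<le> sigp r i" for r by (rule sigp_nonneg)
  show "locbd (\<lambda>r. sigp r i)" unfolding locbd_def
  proof (intro allI impI)
    fix ra rb :: real assume r: "0 < ra" "ra \<le> rb"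
    obtain m M where mM: "0 < m" "m \<le> M" "\<forall>i r r'. ra \<le> r \<longrightarrow> r \<le> r' \<longrightarrow> r' \<le> rb \<longrightarrow> m * (r' - r) \<le> sigp r' i - sigp r i \<and> sigp r' i - sigp r i \<le> M * (r' - r)"
      using sigp_loc[OF r] by blast
    have "\<forall>r r'. ra \<le> r \<longrightarrow> r \<le> r' \<longrightarrow> r' \<le> rb \<longrightarrow> m * (r' - r) \<le> sigp r' i - sigp r i \<and> sigp r' i - sigp r i \<le> M * (r' - r)"
      using mM(3) by blast
    then show "\<exists>m M. 0 < m \<and> m \<le> M \<and> (\<forall>r r'. ra \<le> r \<longrightarrow> r \<le> r' \<longrightarrow> r' \<le> rb \<longrightarrow> m * (r' - r) \<le> sigp r' i - sigp r i \<and> sigp r' i - sigp r i \<le> M * (r' - r))"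
      using mM(1,2) by blast
  qed
  show "\<exists>\<delta>>0. \<forall>r. 0 < r \<longrightarrow> r \<le> \<delta> \<longrightarrow> sigp r i \<le> \<epsilon>" if "\<epsilon> > 0" for \<epsilon>
    using sigp_small[OF that] by blast
  show "\<exists>r\<ge>0. B < sigp r i" for B using sigp_big[of B] by blast
qed


lemma sigp_loc': "\<And>ra rb. 0 < ra \<Longrightarrow> ra \<le> rb \<Longrightarrow> \<exists>m M. 0 < m \<and> m \<le> M \<and>
        (\<forall>i r r'. ra \<le> r \<longrightarrow> r \<le> r' \<longrightarrow> r' \<le> rb \<longrightarrow> m * (r' - r) \<le> sigp r' i - sigp r i \<and> sigp r' i - sigp r i \<le> M * (r' - r))"
  by (rule sigp_loc)

lemma sigp_bdd_above: "bdd_above (range (sigp r))"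
  using sigp_bdd[of r] unfolding bdd_above_def by auto

lemma sigp_bdd_below: "bdd_below (range (sigp r))"
  using sigp_nonneg unfolding bdd_below_def by auto

definition Fmin :: "real \<Rightarrow> real" where "Fmin r = Inf (range (sigp r))"
definition Fmax :: "real \<Rightarrow> real" where "Fmax r = Sup (range (sigp r))"

lemma Fmin_le: "Fmin r \<le> sigp r i"
  unfolding Fmin_def by (rule cINF_lower[OF sigp_bdd_below]) simp

lemma Fmax_ge: "sigp r i \<le> Fmax r"
  unfolding Fmax_def by (rule cSUP_upper[OF _ sigp_bdd_above]) simp

lemma Fmin_Kinf: "class_Kinf Fmin"
proof (rule KinfF)
  show "Fmin 0 = 0" unfolding Fmin_def sigp_zero by simp
  show "0 \<le> Fmin r" for r unfolding Fmin_def by (rule cINF_greatest) (auto simp: sigp_nonneg)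
  show "locbd Fmin" unfolding Fmin_def[abs_def] by (rule locbd_Inf[OF sigp_loc' sigp_nonneg])
  show "\<exists>\<delta>>0. \<forall>r. 0 < r \<longrightarrow> r \<le> \<delta> \<longrightarrow> Fmin r \<le> \<epsilon>" if e: "\<epsilon> > 0" for \<epsilon>
  proof -
    obtain \<delta> where "\<delta> > 0" "\<forall>i r. 0 < r \<longrightarrow> r \<le> \<delta> \<longrightarrow> sigp r i \<le> \<epsilon>" using sigp_small[OF e] by blast
    then show ?thesis using Fmin_le[of _ undefined] by (meson order_trans)
  qed
  show "\<exists>r\<ge>0. B < Fmin r" for B
  proof -
    obtain r where r: "r \<ge> 0" "\<forall>i. B + 1 < sigp r i" using sigp_big[of "B+1"] by blast
    have "B + 1 \<le> Fmin r" unfolding Fmin_def by (rule cINF_greatest) (use r in \<open>auto simp: less_imp_le\<close>)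
    then show ?thesis using r by (intro exI[of _ r]) auto
  qed
qed

lemma Fmax_Kinf: "class_Kinf Fmax"
proof (rule KinfF)
  show "Fmax 0 = 0" unfolding Fmax_def sigp_zero by simp
  show "0 \<le> Fmax r" for r using Fmax_ge[of r undefined] sigp_nonneg[of r undefined] by linarith
  show "locbd Fmax" unfolding Fmax_def[abs_def] by (rule locbd_Sup[OF sigp_loc' sigp_bdd_above])
  show "\<exists>\<delta>>0. \<forall>r. 0 < r \<longrightarrow> r \<le> \<delta> \<longrightarrow> Fmax r \<le> \<epsilon>" if e: "\<epsilon> > 0" for \<epsilon>
  proof -
    obtain \<delta> where d: "\<delta> > 0" "\<forall>i r. 0 < r \<longrightarrow> r \<le> \<delta> \<longrightarrow> sigp r i \<le> \<epsilon>" using sigp_small[OF e] by blast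
    have "Fmax r \<le> \<epsilon>" if "0 < r" "r \<le> \<delta>" for r
      unfolding Fmax_def by (rule cSUP_least) (use d that in auto)
    then show ?thesis using d(1) by blast
  qed
  show "\<exists>r\<ge>0. B < Fmax r" for B
  proof -
    obtain r where r: "r \<ge> 0" "\<forall>i. B < sigp r i" using sigp_big[of B] by blast
    then show ?thesis using Fmax_ge[of r undefined] by (intro exI[of _ r]) (auto intro: less_le_trans)
  qed
qed

lemma main: "path_of_strict_decay Ii gam mu sigp"
  unfolding path_of_strict_decay_def
proof (intro conjI)
  show "\<forall>r\<ge>0. sigp r \<in> linf_pos" using sigp_linf by blast
  have rK: "class_Kinf (\<lambda>x. \<rho> x / 2)" using Kinf_scale[OF rhoK, of "1/2"] by simp
  have "\<forall>r\<ge>0. Gain_rho Ii gam mu (\<lambda>x. \<rho> x / 2) (sigp r) \<le> sigp r"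
    unfolding GR_eq le_fun_def using sigp_decay by blast
  then show "\<exists>\<rho>. class_Kinf \<rho> \<and> (\<forall>r\<ge>0. Gain_rho Ii gam mu \<rho> (sigp r) \<le> sigp r)"
    using rK by blast
  have "\<forall>r\<ge>0. (\<lambda>_. Fmin r) \<le> sigp r \<and> sigp r \<le> (\<lambda>_. Fmax r)"
    unfolding le_fun_def using Fmin_le Fmax_ge by blast
  then show "\<exists>\<phi>min \<phi>max. class_Kinf \<phi>min \<and> class_Kinf \<phi>max \<and>
        (\<forall>r\<ge>0. (\<lambda>_. \<phi>min r) \<le> sigp r \<and> sigp r \<le> (\<lambda>_. \<phi>max r))"
    using Fmin_Kinf Fmax_Kinf by blast
  show "\<forall>i. class_Kinf (\<lambda>r. sigp r i)" using sigp_Kinf by blast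
  show "\<forall>a b. 0 < a \<longrightarrow> a \<le> b \<longrightarrow> (\<exists>l L. 0 < l \<and> l \<le> L \<and>
        (\<forall>r1\<in>{a..b}. \<forall>r2\<in>{a..b}. \<forall>i.
           l * \<bar>r1 - r2\<bar> \<le> \<bar>the_inv_into {0..} (\<lambda>r. sigp r i) r1 - the_inv_into {0..} (\<lambda>r. sigp r i) r2\<bar> \<and>
           \<bar>the_inv_into {0..} (\<lambda>r. sigp r i) r1 - the_inv_into {0..} (\<lambda>r. sigp r i) r2\<bar> \<le> L * \<bar>r1 - r2\<bar>))"
    by (rule InvLip[OF sigp_Kinf sigp_loc' sigp_small sigp_big])
qed

end

theorem proposition2p9:
  fixes Ii :: "'i::countable \<Rightarrow> 'i set"
    and gam :: "'i \<Rightarrow> 'i \<Rightarrow> real \<Rightarrow> real"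
    and mu :: "'i \<Rightarrow> ('i \<Rightarrow> real) \<Rightarrow> ereal"
    and \<sigma> :: "real \<Rightarrow> ('i \<Rightarrow> real)"
  assumes gain: "gain_operator Ii gam mu"
    and range: "\<forall>r\<ge>0. \<sigma> r \<in> linf_pos"
    and cont: "\<forall>r0\<ge>0. \<forall>\<epsilon>>0. \<exists>\<delta>>0. \<forall>r\<ge>0. \<bar>r - r0\<bar> < \<delta> \<longrightarrow> supnorm (\<sigma> r - \<sigma> r0) < \<epsilon>"
    and incr: "\<forall>r1 r2. 0 \<le> r1 \<longrightarrow> r1 \<le> r2 \<longrightarrow> \<sigma> r1 \<le> \<sigma> r2"
    and decay: "\<exists>\<rho>. class_Kinf \<rho> \<and> (\<forall>r\<ge>0. Gain_rho Ii gam mu \<rho> (\<sigma> r) \<le> \<sigma> r)"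
    and bounds: "\<exists>\<phi>min \<phi>max. class_Kinf \<phi>min \<and> class_Kinf \<phi>max \<and>
        (\<forall>r\<ge>0. (\<lambda>_. \<phi>min r) \<le> \<sigma> r \<and> \<sigma> r \<le> (\<lambda>_. \<phi>max r))"
  shows "\<exists>\<sigma>'. path_of_strict_decay Ii gam mu \<sigma>'"
proof -
  obtain \<rho> where \<rho>: "class_Kinf \<rho>" "\<forall>r\<ge>0. Gain_rho Ii gam mu \<rho> (\<sigma> r) \<le> \<sigma> r"
    using decay by blast
  obtain \<phi>min \<phi>max where \<phi>: "class_Kinf \<phi>min" "class_Kinf \<phi>max"
    "\<forall>r\<ge>0. (\<lambda>_. \<phi>min r) \<le> \<sigma> r \<and> \<sigma> r \<le> (\<lambda>_. \<phi>max r)"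
    using bounds by blast
  interpret P: psd_setting Ii gam mu \<sigma> \<rho> \<phi>min \<phi>max
    by (unfold_locales) (fact gain range cont incr \<rho>(1) \<rho>(2) \<phi>(1) \<phi>(2) \<phi>(3))+
  show ?thesis using P.main by blast
qed

end
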